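(* Let $R$ be a compact Hausdorff unitary topological ring satisfying the first countability axiom. (i) Every surjective continuous $R$-linear map $f:M\to N$ of t.d. $R$-modules is strict and admits a continuous (not necessarily additive) map $s:N\to M$ with $f\circ s=\mathrm{id}_N$. (ii) An injective continuous $R$-linear map $i:M\to N$ of t.d. $R$-modules is strict if and only if there is a continuous (not necessarily additive) map $r:N\to M$ with $r\circ i=\mathrm{id}_M$.
   Context: A complete totally disconnected (t.d.) $R$-module is a Hausdorff, complete topological left $R$-module which has a basis of neighbourhoods of $0$ consisting of open submodules and which satisfies the second countability axiom. A continuous $R$-linear map $f:M\to N$ is strict if the induced bijection $M/\ker f\to f(M)$ is a homeomorphism (quotient topology on the source, subspace topology on the target). *)

theory Defs
  imports "HOL-Analysis.Analysis" "HOL-Algebra.Module"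
begin

definition topological_ring :: "('r, 'x) ring_scheme \<Rightarrow> 'r topology \<Rightarrow> bool" where
  "topological_ring R TR \<longleftrightarrow>
     ring R \<and> topspace TR = carrier R \<and>
     continuous_map (prod_topology TR TR) TR (\<lambda>(a, b). a \<oplus>\<^bsub>R\<^esub> b) \<and>
     continuous_map (prod_topology TR TR) TR (\<lambda>(a, b). a \<otimes>\<^bsub>R\<^esub> b) \<and>
     continuous_map TR TR (\<lambda>a. \<ominus>\<^bsub>R\<^esub> a)"

text \<open>Unital left modules over a (not necessarily commutative) ring
(HOL-Algebra's \<open>module\<close> locale requires a commutative ring).\<close>

definition left_module :: "('r, 'x) ring_scheme \<Rightarrow> ('r, 'm) module \<Rightarrow> bool" where
  "left_module R M \<longleftrightarrow>
     ring R \<and> abelian_group M \<and>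
     (\<forall>a\<in>carrier R. \<forall>x\<in>carrier M. a \<odot>\<^bsub>M\<^esub> x \<in> carrier M) \<and>
     (\<forall>a\<in>carrier R. \<forall>b\<in>carrier R. \<forall>x\<in>carrier M.
        (a \<oplus>\<^bsub>R\<^esub> b) \<odot>\<^bsub>M\<^esub> x = a \<odot>\<^bsub>M\<^esub> x \<oplus>\<^bsub>M\<^esub> b \<odot>\<^bsub>M\<^esub> x) \<and>
     (\<forall>a\<in>carrier R. \<forall>x\<in>carrier M. \<forall>y\<in>carrier M.
        a \<odot>\<^bsub>M\<^esub> (x \<oplus>\<^bsub>M\<^esub> y) = a \<odot>\<^bsub>M\<^esub> x \<oplus>\<^bsub>M\<^esub> a \<odot>\<^bsub>M\<^esub> y) \<and>
     (\<forall>a\<in>carrier R. \<forall>b\<in>carrier R. \<forall>x\<in>carrier M.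
        (a \<otimes>\<^bsub>R\<^esub> b) \<odot>\<^bsub>M\<^esub> x = a \<odot>\<^bsub>M\<^esub> (b \<odot>\<^bsub>M\<^esub> x)) \<and>
     (\<forall>x\<in>carrier M. \<one>\<^bsub>R\<^esub> \<odot>\<^bsub>M\<^esub> x = x)"

definition left_submodule :: "('r, 'x) ring_scheme \<Rightarrow> ('r, 'm) module \<Rightarrow> 'm set \<Rightarrow> bool" where
  "left_submodule R M V \<longleftrightarrow>
     V \<subseteq> carrier M \<and> \<zero>\<^bsub>M\<^esub> \<in> V \<and>
     (\<forall>x\<in>V. \<forall>y\<in>V. x \<oplus>\<^bsub>M\<^esub> y \<in> V) \<and>
     (\<forall>x\<in>V. \<ominus>\<^bsub>M\<^esub> x \<in> V) \<and>
     (\<forall>a\<in>carrier R. \<forall>x\<in>V. a \<odot>\<^bsub>M\<^esub> x \<in> V)"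

definition topological_module ::
  "('r, 'x) ring_scheme \<Rightarrow> 'r topology \<Rightarrow> ('r, 'm) module \<Rightarrow> 'm topology \<Rightarrow> bool" where
  "topological_module R TR M TM \<longleftrightarrow>
     topological_ring R TR \<and> left_module R M \<and> topspace TM = carrier M \<and>
     continuous_map (prod_topology TM TM) TM (\<lambda>(x, y). x \<oplus>\<^bsub>M\<^esub> y) \<and>
     continuous_map TM TM (\<lambda>x. \<ominus>\<^bsub>M\<^esub> x) \<and>
     continuous_map (prod_topology TR TM) TM (\<lambda>(a, x). a \<odot>\<^bsub>M\<^esub> x)"

definition cauchy_filter_in :: "('r, 'm) module \<Rightarrow> 'm topology \<Rightarrow> 'm filter \<Rightarrow> bool" where
  "cauchy_filter_in M TM F \<longleftrightarrow>
     (\<forall>U. openin TM U \<and> \<zero>\<^bsub>M\<^esub> \<in> U \<longrightarrow>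
        (\<exists>A. eventually (\<lambda>x. x \<in> A) F \<and> (\<forall>x\<in>A. \<forall>y\<in>A. x \<ominus>\<^bsub>M\<^esub> y \<in> U)))"

definition complete_module_top :: "('r, 'm) module \<Rightarrow> 'm topology \<Rightarrow> bool" where
  "complete_module_top M TM \<longleftrightarrow>
     (\<forall>F. F \<noteq> bot \<and> eventually (\<lambda>x. x \<in> carrier M) F \<and> cauchy_filter_in M TM F \<longrightarrow>
        (\<exists>x\<in>carrier M. limitin TM id x F))"

definition td_module ::
  "('r, 'x) ring_scheme \<Rightarrow> 'r topology \<Rightarrow> ('r, 'm) module \<Rightarrow> 'm topology \<Rightarrow> bool" where
  "td_module R TR M TM \<longleftrightarrow>
     topological_module R TR M TM \<and> Hausdorff_space TM \<and> complete_module_top M TM \<and>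
     (\<forall>U. openin TM U \<and> \<zero>\<^bsub>M\<^esub> \<in> U \<longrightarrow>
        (\<exists>V. left_submodule R M V \<and> openin TM V \<and> V \<subseteq> U)) \<and>
     second_countable TM"

definition linear_map_mod ::
  "('r, 'x) ring_scheme \<Rightarrow> ('r, 'm) module \<Rightarrow> ('r, 'n) module \<Rightarrow> ('m \<Rightarrow> 'n) \<Rightarrow> bool" where
  "linear_map_mod R M N f \<longleftrightarrow>
     f \<in> carrier M \<rightarrow> carrier N \<and>
     (\<forall>x\<in>carrier M. \<forall>y\<in>carrier M. f (x \<oplus>\<^bsub>M\<^esub> y) = f x \<oplus>\<^bsub>N\<^esub> f y) \<and>
     (\<forall>a\<in>carrier R. \<forall>x\<in>carrier M. f (a \<odot>\<^bsub>M\<^esub> x) = a \<odot>\<^bsub>N\<^esub> f x)"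

definition mod_kernel :: "('r, 'm) module \<Rightarrow> ('r, 'n) module \<Rightarrow> ('m \<Rightarrow> 'n) \<Rightarrow> 'm set" where
  "mod_kernel M N f = {x \<in> carrier M. f x = \<zero>\<^bsub>N\<^esub>}"

definition mod_coset :: "('r, 'm) module \<Rightarrow> 'm set \<Rightarrow> 'm \<Rightarrow> 'm set" where
  "mod_coset M K x = {x \<oplus>\<^bsub>M\<^esub> k | k. k \<in> K}"

definition quotient_mod_topology :: "('r, 'm) module \<Rightarrow> 'm topology \<Rightarrow> 'm set \<Rightarrow> 'm set topology" where
  "quotient_mod_topology M TM K =
     topology (\<lambda>U. U \<subseteq> mod_coset M K ` carrier M \<and>
                    openin TM {x \<in> carrier M. mod_coset M K x \<in> U})"

definition induced_map :: "('m \<Rightarrow> 'n) \<Rightarrow> 'm set \<Rightarrow> 'n" where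
  "induced_map f C = f (SOME x. x \<in> C)"

definition strict_map ::
  "('r, 'm) module \<Rightarrow> 'm topology \<Rightarrow> ('r, 'n) module \<Rightarrow> 'n topology \<Rightarrow> ('m \<Rightarrow> 'n) \<Rightarrow> bool" where
  "strict_map M TM N TN f \<longleftrightarrow>
     homeomorphic_map (quotient_mod_topology M TM (mod_kernel M N f))
                      (subtopology TN (f ` carrier M)) (induced_map f)"

end

theory Submission
  imports Defs
begin
context abelian_group begin
lemma sub_trans: "a \<in> carrier G \<Longrightarrow> b \<in> carrier G \<Longrightarrow> c \<in> carrier G \<Longrightarrow> (a \<ominus> b) \<oplus> (b \<ominus> c) = a \<ominus> c"
  by (simp add: minus_eq a_assoc[symmetric]) (simp add: a_assoc l_neg)
lemma neg_sub: "a \<in> carrier G \<Longrightarrow> b \<in> carrier G \<Longrightarrow> \<ominus> (a \<ominus> b) = b \<ominus> a"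
  by (simp add: minus_eq minus_add minus_minus a_comm)
lemma sub_self: "a \<in> carrier G \<Longrightarrow> a \<ominus> a = \<zero>"
  by (simp add: minus_eq r_neg)
lemma sub_zero: "a \<in> carrier G \<Longrightarrow> a \<ominus> \<zero> = a"
  by (simp add: minus_eq)
lemma add_sub_cancel: "a \<in> carrier G \<Longrightarrow> b \<in> carrier G \<Longrightarrow> (a \<oplus> b) \<ominus> a = b"
  proof -
  assume a: "a \<in> carrier G" "b \<in> carrier G"
  hence "(a \<oplus> b) \<oplus> \<ominus> a = b \<oplus> (a \<oplus> \<ominus> a)" by (simp add: a_ac)
  thus ?thesis using a by (simp add: minus_eq r_neg)
qed
lemma add_sub_cancel2: "a \<in> carrier G \<Longrightarrow> b \<in> carrier G \<Longrightarrow> a \<oplus> (b \<ominus> a) = b"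
  proof -
  assume a: "a \<in> carrier G" "b \<in> carrier G"
  hence "a \<oplus> (b \<oplus> \<ominus> a) = b \<oplus> (a \<oplus> \<ominus> a)" by (simp add: a_ac)
  thus ?thesis using a by (simp add: minus_eq r_neg)
qed
lemma sub_sub_sub: "a \<in> carrier G \<Longrightarrow> b \<in> carrier G \<Longrightarrow> c \<in> carrier G \<Longrightarrow> d \<in> carrier G \<Longrightarrow>
   (a \<ominus> c) \<ominus> (b \<ominus> d) = (a \<ominus> b) \<ominus> (c \<ominus> d)"
  by (simp add: minus_eq minus_add minus_minus a_ac)
lemma add_sub_cancel_r: "a \<in> carrier G \<Longrightarrow> b \<in> carrier G \<Longrightarrow> (a \<oplus> b) \<ominus> b = a"
  by (metis a_comm add_sub_cancel)
lemma sub_sub_cancel: "a \<in> carrier G \<Longrightarrow> b \<in> carrier G \<Longrightarrow> c \<in> carrier G \<Longrightarrow> (a \<ominus> c) \<ominus> (b \<ominus> c) = a \<ominus> b"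
  by (simp add: sub_sub_sub sub_self sub_zero)
lemma sub_eq_zero: "a \<in> carrier G \<Longrightarrow> b \<in> carrier G \<Longrightarrow> a \<ominus> b = \<zero> \<Longrightarrow> a = b"
  by (metis add_sub_cancel2 r_zero)
lemma sub_add_neg: "y \<in> carrier G \<Longrightarrow> s \<in> carrier G \<Longrightarrow> t \<in> carrier G \<Longrightarrow> y \<ominus> (s \<oplus> t) = \<ominus> (t \<ominus> (y \<ominus> s))"
  by (simp add: minus_eq minus_add minus_minus a_ac)
lemma coset_shift: "x \<in> carrier G \<Longrightarrow> y \<in> carrier G \<Longrightarrow> k \<in> carrier G \<Longrightarrow> x \<oplus> k = y \<oplus> ((x \<ominus> y) \<oplus> k)"
  by (simp add: a_assoc[symmetric] add_sub_cancel2)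
end

locale tdg = abelian_group G for G :: "('a, 'b) ring_scheme" (structure) +
  fixes T :: "'a topology" and U :: "nat \<Rightarrow> 'a set"
  assumes top: "topspace T = carrier G"
   and Usub: "U n \<subseteq> carrier G" and U0: "\<zero> \<in> U n"
   and Uadd: "x \<in> U n \<Longrightarrow> y \<in> U n \<Longrightarrow> x \<oplus> y \<in> U n"
   and Uneg: "x \<in> U n \<Longrightarrow> \<ominus> x \<in> U n"
   and Udec: "m \<le> n \<Longrightarrow> U n \<subseteq> U m"
   and opn: "openin T W \<longleftrightarrow> W \<subseteq> carrier G \<and> (\<forall>x\<in>W. \<exists>n. \<forall>y\<in>carrier G. y \<ominus> x \<in> U n \<longrightarrow> y \<in> W)"
   and haus: "x \<in> carrier G \<Longrightarrow> (\<forall>n. x \<in> U n) \<Longrightarrow> x = \<zero>"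
   and compl: "(\<forall>k. S k \<in> carrier G) \<Longrightarrow> (\<forall>k l. k \<le> l \<longrightarrow> S l \<ominus> S k \<in> U k) \<Longrightarrow>
                 \<exists>x\<in>carrier G. \<forall>k. x \<ominus> S k \<in> U k"
   and sep: "\<exists>D. countable D \<and> D \<subseteq> carrier G \<and> (\<forall>x\<in>carrier G. \<forall>n. \<exists>d\<in>D. d \<ominus> x \<in> U n)"
begin

lemma Ucar: "x \<in> U n \<Longrightarrow> x \<in> carrier G" using Usub by blast

lemma U_sub: "a \<in> U n \<Longrightarrow> b \<in> U n \<Longrightarrow> a \<ominus> b \<in> U n"
  by (simp add: minus_eq Uadd Uneg)

lemma Umono: "m \<le> n \<Longrightarrow> x \<in> U n \<Longrightarrow> x \<in> U m" using Udec by blast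

lemma near_sym: "x \<in> carrier G \<Longrightarrow> y \<in> carrier G \<Longrightarrow> y \<ominus> x \<in> U n \<Longrightarrow> x \<ominus> y \<in> U n"
  by (metis Uneg neg_sub)

lemma near_trans: "x \<in> carrier G \<Longrightarrow> y \<in> carrier G \<Longrightarrow> z \<in> carrier G \<Longrightarrow>
   z \<ominus> y \<in> U n \<Longrightarrow> y \<ominus> x \<in> U n \<Longrightarrow> z \<ominus> x \<in> U n"
  by (metis Uadd sub_trans)

lemma telescope:
  assumes S: "\<And>k. S k \<in> carrier G" and st: "\<And>k. S (Suc k) \<ominus> S k \<in> U (g k)" and g: "mono g"
    and kl: "k \<le> l"
  shows "S l \<ominus> S k \<in> U (g k)"
  using kl
proof (induction l)
  case 0 thus ?case using S by (simp add: sub_self U0)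
next
  case (Suc l)
  show ?case
  proof (cases "k = Suc l")
    case True thus ?thesis using S by (simp add: sub_self U0)
  next
    case False
    hence kl: "k \<le> l" using Suc by simp
    have "S (Suc l) \<ominus> S l \<in> U (g k)" using st Umono g kl by (meson monoD)
    thus ?thesis using Suc.IH[OF kl] near_trans S by blast
  qed
qed

lemma compl_gen:
  assumes S: "\<And>k. S k \<in> carrier G" and c: "\<And>k l. k \<le> l \<Longrightarrow> S l \<ominus> S k \<in> U (g k)"
    and g: "\<And>k. k \<le> g k"
  shows "\<exists>x\<in>carrier G. \<forall>k. x \<ominus> S k \<in> U (g k)"
proof -
  have "\<forall>k l. k \<le> l \<longrightarrow> S l \<ominus> S k \<in> U k" using c g Umono by blast
  then obtain x where x: "x \<in> carrier G" "\<And>k. x \<ominus> S k \<in> U k" using compl S by blast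
  have "x \<ominus> S k \<in> U (g k)" for k
    using near_trans[OF S[of k] S[of "g k"] x(1) x(2)[of "g k"] c[OF g[of k]]] .
  thus ?thesis using x by blast
qed

lemma ball_open: "x \<in> carrier G \<Longrightarrow> openin T {y\<in>carrier G. y \<ominus> x \<in> U n}"
proof -
  assume x: "x \<in> carrier G"
  show ?thesis unfolding opn
  proof (intro conjI ballI)
    fix y assume y: "y \<in> {y\<in>carrier G. y \<ominus> x \<in> U n}"
    show "\<exists>m. \<forall>w\<in>carrier G. w \<ominus> y \<in> U m \<longrightarrow> w \<in> {y\<in>carrier G. y \<ominus> x \<in> U n}"
      using y x near_trans[of x y] by blast
  qed auto
qed

lemma baire:
  fixes A :: "nat \<Rightarrow> 'a set"
  assumes A: "\<And>k. A k \<subseteq> carrier G" and cov: "carrier G \<subseteq> (\<Union>k. A k)"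
  shows "\<exists>k z m. z \<in> carrier G \<and> (\<forall>w\<in>carrier G. w \<ominus> z \<in> U m \<longrightarrow> (\<forall>i. \<exists>a\<in>A k. a \<ominus> w \<in> U i))"
proof (rule ccontr)
  assume nt: "\<not> ?thesis"
  have H: "\<exists>w\<in>carrier G. w \<ominus> z \<in> U m \<and> (\<exists>i. \<forall>a\<in>A k. a \<ominus> w \<notin> U i)"
    if z: "z \<in> carrier G" for k z m
  proof -
    have "\<not> (\<forall>w\<in>carrier G. w \<ominus> z \<in> U m \<longrightarrow> (\<forall>i. \<exists>a\<in>A k. a \<ominus> w \<in> U i))"
      using nt z by blast
    thus ?thesis by blast
  qed
  define P where "P k z m p \<longleftrightarrow> fst p \<in> carrier G \<and> fst p \<ominus> z \<in> U m \<and> m < snd p \<and>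
      (\<forall>a\<in>carrier G. a \<ominus> fst p \<in> U (snd p) \<longrightarrow> a \<notin> A k)" for k z m p
  have step: "\<exists>p. P k z m p" if z: "z \<in> carrier G" for k z m
  proof -
    obtain w i where w: "w \<in> carrier G" "w \<ominus> z \<in> U m" "\<forall>a\<in>A k. a \<ominus> w \<notin> U i"
      using H[OF z] by blast
    have "P k z m (w, max i (Suc m))" unfolding P_def using w Umono[of i "max i (Suc m)"] by auto
    thus ?thesis by blast
  qed
  define F where "F k z m = (SOME p. P k z m p)" for k z m
  have F: "z \<in> carrier G \<Longrightarrow> P k z m (F k z m)" for k z m
    unfolding F_def by (rule someI_ex[OF step])
  define p where "p = rec_nat (F 0 \<zero> 0) (\<lambda>k q. F (Suc k) (fst q) (snd q))"
  have p0: "p 0 = F 0 \<zero> 0" and pS: "p (Suc k) = F (Suc k) (fst (p k)) (snd (p k))" for k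
    unfolding p_def by simp_all
  have Pp: "P k (if k = 0 then \<zero> else fst (p (k - 1))) (if k = 0 then 0 else snd (p (k - 1))) (p k)" for k
  proof (induction k)
    case 0 thus ?case using F[of \<zero> 0 0] p0 by simp
  next
    case (Suc k)
    have "fst (p k) \<in> carrier G" using Suc unfolding P_def by simp
    thus ?case using F pS by simp
  qed
  have pc: "fst (p k) \<in> carrier G" for k using Pp[of k] unfolding P_def by simp
  have pst: "fst (p (Suc k)) \<ominus> fst (p k) \<in> U (snd (p k))" for k using Pp[of "Suc k"] unfolding P_def by simp
  have pinc: "snd (p k) < snd (p (Suc k))" for k using Pp[of "Suc k"] unfolding P_def by simp
  have pavoid: "\<forall>a\<in>carrier G. a \<ominus> fst (p k) \<in> U (snd (p k)) \<longrightarrow> a \<notin> A k" for k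
    using Pp[of k] unfolding P_def by simp
  have sm: "strict_mono (\<lambda>k. snd (p k))" using pinc by (simp add: strict_mono_Suc_iff)
  hence mo: "mono (\<lambda>k. snd (p k))" by (simp add: strict_mono_mono)
  have gk: "k \<le> snd (p k)" for k using strict_mono_imp_increasing[OF sm] by simp
  have "\<And>k l. k \<le> l \<Longrightarrow> fst (p l) \<ominus> fst (p k) \<in> U (snd (p k))"
    using telescope[of "\<lambda>k. fst (p k)" "\<lambda>k. snd (p k)"] pc pst mo by blast
  then obtain x where x: "x \<in> carrier G" "\<And>k. x \<ominus> fst (p k) \<in> U (snd (p k))"
    using compl_gen[of "\<lambda>k. fst (p k)" "\<lambda>k. snd (p k)"] pc gk by blast
  obtain k where "x \<in> A k" using cov x(1) by blast
  thus False using pavoid[of k] x by blast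
qed

end

locale tdmap = M: tdg M TM V + N: tdg N TN U
  for M :: "('r, 'a) module" and TM V and N :: "('r, 'b) module" and TN U +
  fixes f :: "'a \<Rightarrow> 'b"
  assumes fcar: "x \<in> carrier M \<Longrightarrow> f x \<in> carrier N"
    and fadd: "x \<in> carrier M \<Longrightarrow> y \<in> carrier M \<Longrightarrow> f (x \<oplus>\<^bsub>M\<^esub> y) = f x \<oplus>\<^bsub>N\<^esub> f y"
    and fcont: "\<exists>m. \<forall>x\<in>V m. f x \<in> U n"
begin

lemma f0: "f \<zero>\<^bsub>M\<^esub> = \<zero>\<^bsub>N\<^esub>"
proof -
  have "f \<zero>\<^bsub>M\<^esub> = f \<zero>\<^bsub>M\<^esub> \<oplus>\<^bsub>N\<^esub> f \<zero>\<^bsub>M\<^esub>" using fadd[of "\<zero>\<^bsub>M\<^esub>" "\<zero>\<^bsub>M\<^esub>"] by simp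
  hence "f \<zero>\<^bsub>M\<^esub> \<ominus>\<^bsub>N\<^esub> f \<zero>\<^bsub>M\<^esub> = f \<zero>\<^bsub>M\<^esub>"
    using N.add_sub_cancel[of "f \<zero>\<^bsub>M\<^esub>" "f \<zero>\<^bsub>M\<^esub>"] fcar by simp
  thus ?thesis using N.sub_self fcar by simp
qed

lemma fsub: "x \<in> carrier M \<Longrightarrow> y \<in> carrier M \<Longrightarrow> f (x \<ominus>\<^bsub>M\<^esub> y) = f x \<ominus>\<^bsub>N\<^esub> f y"
proof -
  assume x: "x \<in> carrier M" and y: "y \<in> carrier M"
  have "f x = f (x \<ominus>\<^bsub>M\<^esub> y) \<oplus>\<^bsub>N\<^esub> f y"
    using fadd[of "x \<ominus>\<^bsub>M\<^esub> y" y] x y M.add_sub_cancel2[of y x] M.a_comm by simp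
  thus ?thesis using N.add_sub_cancel_r fcar x y by simp
qed

lemma fneg: "x \<in> carrier M \<Longrightarrow> f (\<ominus>\<^bsub>M\<^esub> x) = \<ominus>\<^bsub>N\<^esub> f x"
  using fsub[of "\<zero>\<^bsub>M\<^esub>" x] f0 fcar by (simp add: M.minus_eq N.minus_eq)

lemma cont_from:
  assumes gc: "\<And>x. x \<in> carrier N \<Longrightarrow> g x \<in> carrier M"
    and gn: "\<And>x n. x \<in> carrier N \<Longrightarrow> \<exists>m. \<forall>y\<in>carrier N. y \<ominus>\<^bsub>N\<^esub> x \<in> U m \<longrightarrow> g y \<ominus>\<^bsub>M\<^esub> g x \<in> V n"
  shows "continuous_map TN TM g"
  unfolding continuous_map_def
proof (intro conjI allI impI)
  show "g \<in> topspace TN \<rightarrow> topspace TM" using gc N.top M.top by auto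
  fix W assume W: "openin TM W"
  show "openin TN {x \<in> topspace TN. g x \<in> W}"
    unfolding N.opn N.top
  proof (intro conjI ballI)
    fix x assume x: "x \<in> {x \<in> carrier N. g x \<in> W}"
    obtain n where n: "\<forall>y\<in>carrier M. y \<ominus>\<^bsub>M\<^esub> g x \<in> V n \<longrightarrow> y \<in> W"
      using W x unfolding M.opn by blast
    obtain m where m: "\<forall>y\<in>carrier N. y \<ominus>\<^bsub>N\<^esub> x \<in> U m \<longrightarrow> g y \<ominus>\<^bsub>M\<^esub> g x \<in> V n"
      using gn x by blast
    show "\<exists>m. \<forall>y\<in>carrier N. y \<ominus>\<^bsub>N\<^esub> x \<in> U m \<longrightarrow> y \<in> {x \<in> carrier N. g x \<in> W}"
      using n m gc by blast
  qed auto
qed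

lemma fV: "x \<in> V n \<Longrightarrow> f x \<in> carrier N" using fcar M.Ucar by blast

lemma open_map_V:
  assumes surj: "f ` carrier M = carrier N"
  shows "\<exists>j. U j \<subseteq> f ` V n"
proof -
  have adh: "\<exists>j. \<forall>y\<in>U j. \<forall>i. \<exists>a\<in>V n. f a \<ominus>\<^bsub>N\<^esub> y \<in> U i" for n
  proof -
    obtain D where D: "countable D" "D \<subseteq> carrier M" "\<forall>x\<in>carrier M. \<forall>n. \<exists>d\<in>D. d \<ominus>\<^bsub>M\<^esub> x \<in> V n"
      using M.sep by blast
    have Dne: "D \<noteq> {}" using D(3) M.zero_closed by blast
    define d where "d k = from_nat_into D k" for k
    have dD: "d k \<in> D" for k using Dne d_def from_nat_into by metis
    define A where "A k = f ` {x\<in>carrier M. x \<ominus>\<^bsub>M\<^esub> d k \<in> V n}" for k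
    have Asub: "A k \<subseteq> carrier N" for k using A_def fcar by auto
    have cov: "carrier N \<subseteq> (\<Union>k. A k)"
    proof
      fix y assume "y \<in> carrier N"
      then obtain x where x: "x \<in> carrier M" "y = f x" using surj by blast
      obtain e where e: "e \<in> D" "e \<ominus>\<^bsub>M\<^esub> x \<in> V n" using D(3) x by blast
      obtain k where "d k = e" using from_nat_into_surj[OF D(1) e(1)] d_def by blast
      hence "x \<ominus>\<^bsub>M\<^esub> d k \<in> V n" using M.near_sym e D(2) x by blast
      thus "y \<in> (\<Union>k. A k)" using x A_def by blast
    qed
    obtain k z m where z: "z \<in> carrier N"
      and zm: "\<forall>w\<in>carrier N. w \<ominus>\<^bsub>N\<^esub> z \<in> U m \<longrightarrow> (\<forall>i. \<exists>a\<in>A k. a \<ominus>\<^bsub>N\<^esub> w \<in> U i)"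
      using N.baire[OF Asub cov] by blast
    have dk: "d k \<in> carrier M" using dD D(2) by blast
    have "\<forall>y\<in>U m. \<forall>i. \<exists>a\<in>V n. f a \<ominus>\<^bsub>N\<^esub> y \<in> U i"
    proof (intro ballI allI)
      fix y i assume y: "y \<in> U m"
      have yc: "y \<in> carrier N" using y N.Ucar by blast
      define w1 where "w1 = z \<oplus>\<^bsub>N\<^esub> y"
      have w1: "w1 \<in> carrier N" "w1 \<ominus>\<^bsub>N\<^esub> z = y" using w1_def z yc N.add_sub_cancel by auto
      obtain a1 where a1: "a1 \<in> A k" "a1 \<ominus>\<^bsub>N\<^esub> w1 \<in> U i" using zm w1 y by metis
      obtain a2 where a2: "a2 \<in> A k" "a2 \<ominus>\<^bsub>N\<^esub> z \<in> U i"
        using zm z N.sub_self[OF z] N.U0 by metis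
      obtain x1 where x1: "x1 \<in> carrier M" "x1 \<ominus>\<^bsub>M\<^esub> d k \<in> V n" "a1 = f x1" using a1 A_def by blast
      obtain x2 where x2: "x2 \<in> carrier M" "x2 \<ominus>\<^bsub>M\<^esub> d k \<in> V n" "a2 = f x2" using a2 A_def by blast
      have "x1 \<ominus>\<^bsub>M\<^esub> x2 \<in> V n"
        using M.U_sub[OF x1(2) x2(2)] M.sub_sub_cancel[OF x1(1) x2(1) dk] by simp
      moreover have "f (x1 \<ominus>\<^bsub>M\<^esub> x2) \<ominus>\<^bsub>N\<^esub> y \<in> U i"
      proof -
        have "(a1 \<ominus>\<^bsub>N\<^esub> w1) \<ominus>\<^bsub>N\<^esub> (a2 \<ominus>\<^bsub>N\<^esub> z) = (a1 \<ominus>\<^bsub>N\<^esub> a2) \<ominus>\<^bsub>N\<^esub> (w1 \<ominus>\<^bsub>N\<^esub> z)"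
          using N.sub_sub_sub[of a1 a2 w1 z] x1 x2 fcar w1 z by simp
        thus ?thesis using N.U_sub[OF a1(2) a2(2)] w1 fsub x1 x2 by simp
      qed
      ultimately show "\<exists>a\<in>V n. f a \<ominus>\<^bsub>N\<^esub> y \<in> U i" by blast
    qed
    thus ?thesis by blast
  qed
  then obtain jj where jj: "\<And>n. \<forall>y\<in>U (jj n). \<forall>i. \<exists>a\<in>V n. f a \<ominus>\<^bsub>N\<^esub> y \<in> U i" by metis
  define j where "j n = n + (\<Sum>k\<le>n. jj k)" for n
  have jge: "n \<le> j n" "jj n \<le> j n" for n
  proof -
    have "jj n \<le> (\<Sum>k\<le>n. jj k)" by (rule member_le_sum) auto
    thus "n \<le> j n" "jj n \<le> j n" unfolding j_def by auto
  qed
  have jmono: "mono j" unfolding j_def mono_def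
    by (auto intro!: add_mono sum_mono2)
  have adhj: "\<forall>y\<in>U (j n). \<forall>i. \<exists>a\<in>V n. f a \<ominus>\<^bsub>N\<^esub> y \<in> U i" for n
    using jj[of n] N.Umono[OF jge(2)[of n]] by blast
  have "U (j (Suc n)) \<subseteq> f ` V n"
  proof
    fix y assume y: "y \<in> U (j (Suc n))"
    have yc: "y \<in> carrier N" using y N.Ucar by blast
    define st where "st k s = (SOME x. x \<in> V (Suc n + k) \<and> f x \<ominus>\<^bsub>N\<^esub> (y \<ominus>\<^bsub>N\<^esub> f s) \<in> U (j (Suc (Suc n + k))))" for k s
    define S where "S = rec_nat \<zero>\<^bsub>M\<^esub> (\<lambda>k s. s \<oplus>\<^bsub>M\<^esub> st k s)"
    have S0: "S 0 = \<zero>\<^bsub>M\<^esub>" and SS: "S (Suc k) = S k \<oplus>\<^bsub>M\<^esub> st k (S k)" for k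
      unfolding S_def by simp_all
    have inv: "S k \<in> carrier M \<and> y \<ominus>\<^bsub>N\<^esub> f (S k) \<in> U (j (Suc n + k))" for k
    proof (induction k)
      case 0 thus ?case using S0 f0 y N.sub_zero yc by simp
    next
      case (Suc k)
      have ex: "\<exists>x. x \<in> V (Suc n + k) \<and> f x \<ominus>\<^bsub>N\<^esub> (y \<ominus>\<^bsub>N\<^esub> f (S k)) \<in> U (j (Suc (Suc n + k)))"
        using adhj[of "Suc n + k"] Suc by blast
      have st: "st k (S k) \<in> V (Suc n + k) \<and> f (st k (S k)) \<ominus>\<^bsub>N\<^esub> (y \<ominus>\<^bsub>N\<^esub> f (S k)) \<in> U (j (Suc (Suc n + k)))"
        unfolding st_def by (rule someI_ex[OF ex])
      have stc: "st k (S k) \<in> carrier M" using st M.Ucar by blast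
      have "y \<ominus>\<^bsub>N\<^esub> f (S (Suc k)) = \<ominus>\<^bsub>N\<^esub> (f (st k (S k)) \<ominus>\<^bsub>N\<^esub> (y \<ominus>\<^bsub>N\<^esub> f (S k)))"
        using SS fadd Suc stc N.sub_add_neg yc fcar by simp
      thus ?case using st N.Uneg SS Suc stc by simp
    qed
    have Sc: "S k \<in> carrier M" for k using inv by blast
    have Sst: "S (Suc k) \<ominus>\<^bsub>M\<^esub> S k \<in> V (Suc n + k)" for k
    proof -
      have ex: "\<exists>x. x \<in> V (Suc n + k) \<and> f x \<ominus>\<^bsub>N\<^esub> (y \<ominus>\<^bsub>N\<^esub> f (S k)) \<in> U (j (Suc (Suc n + k)))"
        using adhj[of "Suc n + k"] inv by blast
      have st: "st k (S k) \<in> V (Suc n + k)"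
        unfolding st_def using someI_ex[OF ex] by blast
      thus ?thesis using SS M.add_sub_cancel Sc M.Ucar by simp
    qed
    have mo: "mono (\<lambda>k. Suc n + k)" by (simp add: mono_def)
    obtain x where x: "x \<in> carrier M" "\<And>k. x \<ominus>\<^bsub>M\<^esub> S k \<in> V (Suc n + k)"
      using M.compl_gen[of S "\<lambda>k. Suc n + k"] M.telescope[of S "\<lambda>k. Suc n + k"] Sc Sst mo by force
    have xV: "x \<in> V n" using x(2)[of 0] S0 M.sub_zero x(1) M.Umono[of n "Suc n"] by simp
    have "y \<ominus>\<^bsub>N\<^esub> f x \<in> U i" for i
    proof -
      obtain m where m: "\<forall>x\<in>V m. f x \<in> U i" using fcont by blast
      define k where "k = m + i"
      have "x \<ominus>\<^bsub>M\<^esub> S k \<in> V m" using x(2)[of k] M.Umono[of m "Suc n + k"] k_def by simp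
      hence a: "f x \<ominus>\<^bsub>N\<^esub> f (S k) \<in> U i" using m fsub[OF x(1) Sc[of k]] by metis
      have "j (Suc n + k) \<ge> i" using jge(1)[of "Suc n + k"] k_def by simp
      hence b: "y \<ominus>\<^bsub>N\<^esub> f (S k) \<in> U i" using inv[of k] N.Umono by blast
      have "y \<ominus>\<^bsub>N\<^esub> f x = (y \<ominus>\<^bsub>N\<^esub> f (S k)) \<ominus>\<^bsub>N\<^esub> (f x \<ominus>\<^bsub>N\<^esub> f (S k))"
        using N.sub_sub_cancel[of y "f x" "f (S k)"] yc fcar x(1) Sc by simp
      thus ?thesis using N.U_sub[OF b a] by simp
    qed
    hence "y \<ominus>\<^bsub>N\<^esub> f x = \<zero>\<^bsub>N\<^esub>" using N.haus[of "y \<ominus>\<^bsub>N\<^esub> f x"] yc fcar[OF x(1)] by simp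
    hence "y = f x" using N.sub_eq_zero[OF yc fcar[OF x(1)]] by simp
    thus "y \<in> f ` V n" using xV by blast
  qed
  thus ?thesis by blast
qed

end

context tdmap begin

lemma cont_to:
  assumes g: "continuous_map TN TM g" and x: "x \<in> carrier N"
  shows "\<exists>m. \<forall>y\<in>carrier N. y \<ominus>\<^bsub>N\<^esub> x \<in> U m \<longrightarrow> g y \<ominus>\<^bsub>M\<^esub> g x \<in> V n"
proof -
  have gx: "g x \<in> carrier M" using g x N.top M.top unfolding continuous_map_def by auto
  have W: "openin TM {z\<in>carrier M. z \<ominus>\<^bsub>M\<^esub> g x \<in> V n}" by (rule M.ball_open[OF gx])
  have P: "openin TN {y \<in> topspace TN. g y \<in> {z\<in>carrier M. z \<ominus>\<^bsub>M\<^esub> g x \<in> V n}}"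
    by (rule openin_continuous_map_preimage[OF g W])
  have xP: "x \<in> {y \<in> topspace TN. g y \<in> {z\<in>carrier M. z \<ominus>\<^bsub>M\<^esub> g x \<in> V n}}"
    using x gx N.top M.sub_self[OF gx] M.U0 by simp
  obtain m where "\<forall>y\<in>carrier N. y \<ominus>\<^bsub>N\<^esub> x \<in> U m \<longrightarrow> y \<in> {y \<in> topspace TN. g y \<in> {z\<in>carrier M. z \<ominus>\<^bsub>M\<^esub> g x \<in> V n}}"
    using P xP unfolding N.opn by blast
  thus ?thesis by blast
qed

lemma f_open:
  assumes surj: "f ` carrier M = carrier N" and W: "openin TM W"
  shows "openin TN (f ` W)"
  unfolding N.opn
proof (intro conjI ballI)
  have Wc: "W \<subseteq> carrier M" using W M.opn by blast
  thus "f ` W \<subseteq> carrier N" using fcar by blast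
  fix y assume "y \<in> f ` W"
  then obtain x where x: "x \<in> W" "y = f x" by blast
  have xc: "x \<in> carrier M" using x Wc by blast
  obtain n where n: "\<forall>z\<in>carrier M. z \<ominus>\<^bsub>M\<^esub> x \<in> V n \<longrightarrow> z \<in> W" using W x unfolding M.opn by blast
  obtain j where j: "U j \<subseteq> f ` V n" using open_map_V[OF surj] by blast
  have "y' \<in> f ` W" if y': "y' \<in> carrier N" "y' \<ominus>\<^bsub>N\<^esub> y \<in> U j" for y'
  proof -
    obtain v where v: "v \<in> V n" "y' \<ominus>\<^bsub>N\<^esub> f x = f v" using j y' x by blast
    have vc: "v \<in> carrier M" using v M.Ucar by blast
    have "(x \<oplus>\<^bsub>M\<^esub> v) \<ominus>\<^bsub>M\<^esub> x = v" using M.add_sub_cancel xc vc by simp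
    hence "x \<oplus>\<^bsub>M\<^esub> v \<in> W" using n v xc vc by simp
    moreover have "f (x \<oplus>\<^bsub>M\<^esub> v) = y'"
      using fadd[OF xc vc] v N.add_sub_cancel2[OF fcar[OF xc] y'(1)] by simp
    ultimately show ?thesis by force
  qed
  thus "\<exists>m. \<forall>y'\<in>carrier N. y' \<ominus>\<^bsub>N\<^esub> y \<in> U m \<longrightarrow> y' \<in> f ` W" by blast
qed

lemma W_add: "a \<in> f ` V k \<Longrightarrow> b \<in> f ` V k \<Longrightarrow> a \<oplus>\<^bsub>N\<^esub> b \<in> f ` V k"
proof -
  assume "a \<in> f ` V k" "b \<in> f ` V k"
  then obtain x y where "x \<in> V k" "y \<in> V k" "a = f x" "b = f y" by blast
  thus ?thesis using fadd M.Ucar M.Uadd by (metis image_eqI)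
qed

lemma W_neg: "a \<in> f ` V k \<Longrightarrow> \<ominus>\<^bsub>N\<^esub> a \<in> f ` V k"
proof -
  assume "a \<in> f ` V k"
  then obtain x where "x \<in> V k" "a = f x" by blast
  thus ?thesis using fneg M.Ucar M.Uneg by (metis image_eqI)
qed

lemma W_sub: "a \<in> f ` V k \<Longrightarrow> b \<in> f ` V k \<Longrightarrow> a \<ominus>\<^bsub>N\<^esub> b \<in> f ` V k"
  using W_add W_neg by (simp add: N.minus_eq)

lemma W_car: "a \<in> f ` V k \<Longrightarrow> a \<in> carrier N" using fV by blast

lemma W0: "\<zero>\<^bsub>N\<^esub> \<in> f ` V k" using f0 M.U0 by (metis image_eqI)

lemma W_mono: "m \<le> k \<Longrightarrow> f ` V k \<subseteq> f ` V m" using M.Udec by blast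

lemma section_ex:
  assumes surj: "f ` carrier M = carrier N"
  shows "\<exists>s. continuous_map TN TM s \<and> (\<forall>y\<in>carrier N. f (s y) = y)"
proof -
  define W where "W k = f ` V k" for k
  define rep where "rep k y = (SOME z. z \<in> carrier N \<and> z \<ominus>\<^bsub>N\<^esub> y \<in> W k)" for k y
  have rep: "rep k y \<in> carrier N \<and> rep k y \<ominus>\<^bsub>N\<^esub> y \<in> W k" if y: "y \<in> carrier N" for k y
  proof -
    have "\<exists>z. z \<in> carrier N \<and> z \<ominus>\<^bsub>N\<^esub> y \<in> W k" using y N.sub_self[OF y] W0 W_def by metis
    thus ?thesis unfolding rep_def by (rule someI_ex)
  qed
  have rep_eq: "rep k y' = rep k y" if y: "y \<in> carrier N" "y' \<in> carrier N" "y' \<ominus>\<^bsub>N\<^esub> y \<in> W k" for k y y'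
  proof -
    have "{z. z \<in> carrier N \<and> z \<ominus>\<^bsub>N\<^esub> y' \<in> W k} = {z. z \<in> carrier N \<and> z \<ominus>\<^bsub>N\<^esub> y \<in> W k}"
    proof (intro Collect_cong iffI conjI)
      fix z assume z: "z \<in> carrier N \<and> z \<ominus>\<^bsub>N\<^esub> y' \<in> W k"
      thus "z \<in> carrier N" by blast
      show "z \<ominus>\<^bsub>N\<^esub> y \<in> W k" using W_add[of "z \<ominus>\<^bsub>N\<^esub> y'" k "y' \<ominus>\<^bsub>N\<^esub> y"] z y N.sub_trans W_def by simp
    next
      fix z assume z: "z \<in> carrier N \<and> z \<ominus>\<^bsub>N\<^esub> y \<in> W k"
      thus "z \<in> carrier N" by blast
      show "z \<ominus>\<^bsub>N\<^esub> y' \<in> W k" using W_sub[of "z \<ominus>\<^bsub>N\<^esub> y" k "y' \<ominus>\<^bsub>N\<^esub> y"] z y N.sub_sub_cancel W_def by simp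
    qed
    hence "(\<lambda>z. z \<in> carrier N \<and> z \<ominus>\<^bsub>N\<^esub> y' \<in> W k) = (\<lambda>z. z \<in> carrier N \<and> z \<ominus>\<^bsub>N\<^esub> y \<in> W k)"
      unfolding set_eq_iff mem_Collect_eq by (intro ext) blast
    thus ?thesis unfolding rep_def by (rule arg_cong[where f=Eps])
  qed
  define s0 where "s0 y = (SOME x. x \<in> carrier M \<and> f x = rep 0 y)" for y
  define stp where "stp k y s = s \<oplus>\<^bsub>M\<^esub> (SOME t. t \<in> V k \<and> f t = rep (Suc k) y \<ominus>\<^bsub>N\<^esub> f s)" for k y s
  define ss where "ss k y = rec_nat (s0 y) (\<lambda>k s. stp k y s) k" for k y
  have ss0: "ss 0 y = s0 y" and ssS: "ss (Suc k) y = stp k y (ss k y)" for k y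
    unfolding ss_def by simp_all
  have inv: "ss k y \<in> carrier M \<and> f (ss k y) = rep k y \<and> (k > 0 \<longrightarrow> ss k y \<ominus>\<^bsub>M\<^esub> ss (k - 1) y \<in> V (k - 1))"
    if y: "y \<in> carrier N" for k y
  proof (induction k)
    case 0
    have "\<exists>x. x \<in> carrier M \<and> f x = rep 0 y" using rep[OF y] surj by (metis imageE)
    thus ?case unfolding ss0 s0_def using someI_ex by simp
  next
    case (Suc k)
    have a: "rep (Suc k) y \<ominus>\<^bsub>N\<^esub> rep k y \<in> W k"
    proof -
      have "rep (Suc k) y \<ominus>\<^bsub>N\<^esub> y \<in> W k" using rep[OF y, of "Suc k"] W_mono[of k "Suc k"] W_def by auto
      hence "(rep (Suc k) y \<ominus>\<^bsub>N\<^esub> y) \<ominus>\<^bsub>N\<^esub> (rep k y \<ominus>\<^bsub>N\<^esub> y) \<in> W k"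
        using W_sub[of "rep (Suc k) y \<ominus>\<^bsub>N\<^esub> y" k "rep k y \<ominus>\<^bsub>N\<^esub> y"] rep[OF y] W_def by simp
      thus ?thesis using rep[OF y] N.sub_sub_cancel[of "rep (Suc k) y" "rep k y" y] y by simp
    qed
    have ex: "\<exists>t. t \<in> V k \<and> f t = rep (Suc k) y \<ominus>\<^bsub>N\<^esub> f (ss k y)" using a Suc W_def by auto
    define t where "t = (SOME t. t \<in> V k \<and> f t = rep (Suc k) y \<ominus>\<^bsub>N\<^esub> f (ss k y))"
    have t: "t \<in> V k" "f t = rep (Suc k) y \<ominus>\<^bsub>N\<^esub> f (ss k y)" unfolding t_def using someI_ex[OF ex] by auto
    have tc: "t \<in> carrier M" using t M.Ucar by blast
    have e: "ss (Suc k) y = ss k y \<oplus>\<^bsub>M\<^esub> t" unfolding ssS stp_def t_def by simp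
    have "f (ss (Suc k) y) = rep (Suc k) y"
      using e fadd[of "ss k y" t] Suc tc t N.add_sub_cancel2 rep[OF y] by simp
    moreover have "ss (Suc k) y \<ominus>\<^bsub>M\<^esub> ss k y = t" using e M.add_sub_cancel Suc tc by simp
    ultimately show ?case using e Suc tc t by simp
  qed
  have ssc: "ss k y \<in> carrier M" if "y \<in> carrier N" for k y using inv that by blast
  have ssf: "f (ss k y) = rep k y" if "y \<in> carrier N" for k y using inv that by blast
  have ssst: "ss (Suc k) y \<ominus>\<^bsub>M\<^esub> ss k y \<in> V k" if "y \<in> carrier N" for k y using inv[OF that, of "Suc k"] by simp
  have loc: "ss k y' = ss k y" if y: "y \<in> carrier N" "y' \<in> carrier N" "y' \<ominus>\<^bsub>N\<^esub> y \<in> W k" for k y y'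
    using y(3)
  proof (induction k)
    case 0 thus ?case using rep_eq[OF y(1,2)] ss0 s0_def by simp
  next
    case (Suc k)
    have "y' \<ominus>\<^bsub>N\<^esub> y \<in> W k" using Suc.prems W_mono[of k "Suc k"] W_def by auto
    hence "ss k y' = ss k y" using Suc.IH by blast
    thus ?case using rep_eq[OF y(1,2) Suc.prems] ssS stp_def by simp
  qed
  have lim: "\<exists>x. x \<in> carrier M \<and> (\<forall>k. x \<ominus>\<^bsub>M\<^esub> ss k y \<in> V k)" if y: "y \<in> carrier N" for y
  proof -
    have "\<And>k l. k \<le> l \<Longrightarrow> ss l y \<ominus>\<^bsub>M\<^esub> ss k y \<in> V (id k)"
      using M.telescope[of "\<lambda>k. ss k y" id] ssc[OF y] ssst[OF y] by (simp add: mono_def)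
    thus ?thesis using M.compl_gen[of "\<lambda>k. ss k y" id] ssc[OF y] by auto
  qed
  define sec where "sec y = (SOME x. x \<in> carrier M \<and> (\<forall>k. x \<ominus>\<^bsub>M\<^esub> ss k y \<in> V k))" for y
  have sec: "sec y \<in> carrier M \<and> (\<forall>k. sec y \<ominus>\<^bsub>M\<^esub> ss k y \<in> V k)" if "y \<in> carrier N" for y
    unfolding sec_def using someI_ex[OF lim[OF that]] .
  have fsec: "f (sec y) = y" if y: "y \<in> carrier N" for y
  proof -
    have fs: "f (sec y) \<in> carrier N" using sec[OF y] fcar by blast
    have inW: "f (sec y) \<ominus>\<^bsub>N\<^esub> y \<in> W k" for k
    proof -
      have "f (sec y) \<ominus>\<^bsub>N\<^esub> y = (f (sec y) \<ominus>\<^bsub>N\<^esub> f (ss k y)) \<oplus>\<^bsub>N\<^esub> (f (ss k y) \<ominus>\<^bsub>N\<^esub> y)"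
        using N.sub_trans[of "f (sec y)" "f (ss k y)" y] fs fcar ssc y by simp
      also have "\<dots> = f (sec y \<ominus>\<^bsub>M\<^esub> ss k y) \<oplus>\<^bsub>N\<^esub> (rep k y \<ominus>\<^bsub>N\<^esub> y)"
        using fsub sec[OF y] ssc[OF y] ssf[OF y] by simp
      finally show ?thesis using W_add sec[OF y] rep[OF y] W_def by simp
    qed
    have "f (sec y) \<ominus>\<^bsub>N\<^esub> y \<in> U i" for i
    proof -
      obtain m where "\<forall>x\<in>V m. f x \<in> U i" using fcont by blast
      thus ?thesis using inW[of m] W_def by auto
    qed
    hence "f (sec y) \<ominus>\<^bsub>N\<^esub> y = \<zero>\<^bsub>N\<^esub>" using N.haus fs y by simp
    thus ?thesis using N.sub_eq_zero fs y by simp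
  qed
  have "continuous_map TN TM sec"
  proof (rule cont_from)
    show "\<And>x. x \<in> carrier N \<Longrightarrow> sec x \<in> carrier M" using sec by blast
    fix y n assume y: "y \<in> carrier N"
    obtain j where j: "U j \<subseteq> W n" using open_map_V[OF surj] W_def by blast
    have "sec y' \<ominus>\<^bsub>M\<^esub> sec y \<in> V n" if y': "y' \<in> carrier N" "y' \<ominus>\<^bsub>N\<^esub> y \<in> U j" for y'
    proof -
      have e: "ss n y' = ss n y" using loc[OF y y'(1)] y' j by blast
      have "sec y' \<ominus>\<^bsub>M\<^esub> sec y = (sec y' \<ominus>\<^bsub>M\<^esub> ss n y) \<ominus>\<^bsub>M\<^esub> (sec y \<ominus>\<^bsub>M\<^esub> ss n y)"
        using M.sub_sub_cancel sec y y' ssc by simp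
      thus ?thesis using M.U_sub sec[OF y] sec[OF y'(1)] e by metis
    qed
    thus "\<exists>m. \<forall>y'\<in>carrier N. y' \<ominus>\<^bsub>N\<^esub> y \<in> U m \<longrightarrow> sec y' \<ominus>\<^bsub>M\<^esub> sec y \<in> V n" by blast
  qed
  thus ?thesis using fsec by blast
qed

end

context tdmap begin

lemma V_open: "openin TM (V n)"
  unfolding M.opn
proof (intro conjI ballI)
  show "V n \<subseteq> carrier M" by (rule M.Usub)
  fix x assume x: "x \<in> V n"
  have "y \<in> V n" if "y \<in> carrier M" "y \<ominus>\<^bsub>M\<^esub> x \<in> V n" for y
    using M.Uadd[OF x that(2)] M.add_sub_cancel2[of x y] M.Ucar[OF x] that(1) by simp
  thus "\<exists>m. \<forall>y\<in>carrier M. y \<ominus>\<^bsub>M\<^esub> x \<in> V m \<longrightarrow> y \<in> V n" by blast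
qed

lemma rel_from_retract:
  assumes r: "continuous_map TN TM r" and rf: "\<forall>x\<in>carrier M. r (f x) = x"
  shows "\<exists>j. \<forall>x\<in>carrier M. f x \<in> U j \<longrightarrow> x \<in> V n"
proof -
  obtain m where m: "\<forall>y\<in>carrier N. y \<ominus>\<^bsub>N\<^esub> \<zero>\<^bsub>N\<^esub> \<in> U m \<longrightarrow> r y \<ominus>\<^bsub>M\<^esub> r \<zero>\<^bsub>N\<^esub> \<in> V n"
    using cont_to[OF r N.zero_closed] by blast
  have r0: "r \<zero>\<^bsub>N\<^esub> = \<zero>\<^bsub>M\<^esub>" using rf f0 M.zero_closed by metis
  have "x \<in> V n" if "x \<in> carrier M" "f x \<in> U m" for x
    using m[rule_format, of "f x"] that fcar rf r0 N.sub_zero M.sub_zero by simp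
  thus ?thesis by blast
qed

lemma rel_imp_open_image:
  assumes rel: "\<And>n. \<exists>j. \<forall>x\<in>carrier M. f x \<in> U j \<longrightarrow> x \<in> V n" and W: "openin TM W"
  shows "openin (subtopology TN (f ` carrier M)) (f ` W)"
proof -
  have Wc: "W \<subseteq> carrier M" using W M.opn by blast
  define T where "T = {y\<in>carrier N. \<exists>x\<in>W. \<exists>j. (\<forall>x'\<in>carrier M. f x' \<ominus>\<^bsub>N\<^esub> f x \<in> U j \<longrightarrow> x' \<in> W) \<and> y \<ominus>\<^bsub>N\<^esub> f x \<in> U j}"
  have To: "openin TN T"
    unfolding N.opn
  proof (intro conjI ballI)
    show "T \<subseteq> carrier N" unfolding T_def by blast
    fix y assume "y \<in> T"
    then obtain x j where y: "y \<in> carrier N" "x \<in> W" "\<forall>x'\<in>carrier M. f x' \<ominus>\<^bsub>N\<^esub> f x \<in> U j \<longrightarrow> x' \<in> W"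
      "y \<ominus>\<^bsub>N\<^esub> f x \<in> U j" unfolding T_def by blast
    have fx: "f x \<in> carrier N" using y(2) Wc fcar by blast
    have "y' \<in> T" if yy: "y' \<in> carrier N" "y' \<ominus>\<^bsub>N\<^esub> y \<in> U j" for y'
    proof -
      have "y' \<ominus>\<^bsub>N\<^esub> f x \<in> U j" using N.near_trans[OF fx y(1) yy(1) yy(2) y(4)] .
      thus ?thesis unfolding T_def using yy(1) y(2) y(3) by blast
    qed
    thus "\<exists>m. \<forall>y'\<in>carrier N. y' \<ominus>\<^bsub>N\<^esub> y \<in> U m \<longrightarrow> y' \<in> T" by blast
  qed
  have "f ` W = T \<inter> f ` carrier M"
  proof
    show "f ` W \<subseteq> T \<inter> f ` carrier M"
    proof
      fix y assume "y \<in> f ` W"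
      then obtain x where x: "x \<in> W" "y = f x" by blast
      have xc: "x \<in> carrier M" using x Wc by blast
      obtain n where n: "\<forall>z\<in>carrier M. z \<ominus>\<^bsub>M\<^esub> x \<in> V n \<longrightarrow> z \<in> W" using W x unfolding M.opn by blast
      obtain j where j: "\<forall>x\<in>carrier M. f x \<in> U j \<longrightarrow> x \<in> V n" using rel by blast
      have A: "\<forall>x'\<in>carrier M. f x' \<ominus>\<^bsub>N\<^esub> f x \<in> U j \<longrightarrow> x' \<in> W"
      proof (intro ballI impI)
        fix x' assume x': "x' \<in> carrier M" "f x' \<ominus>\<^bsub>N\<^esub> f x \<in> U j"
        have "f (x' \<ominus>\<^bsub>M\<^esub> x) \<in> U j" using fsub[OF x'(1) xc] x'(2) by simp
        hence "x' \<ominus>\<^bsub>M\<^esub> x \<in> V n" using j M.minus_closed[OF x'(1) xc] by blast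
        thus "x' \<in> W" using n x'(1) by blast
      qed
      have B: "y \<ominus>\<^bsub>N\<^esub> f x \<in> U j" using x N.sub_self fcar xc N.U0 by simp
      have "y \<in> carrier N" using x xc fcar by simp
      hence "y \<in> T" unfolding T_def using x(1) A B by blast
      thus "y \<in> T \<inter> f ` carrier M" using x xc by blast
    qed
    show "T \<inter> f ` carrier M \<subseteq> f ` W"
    proof
      fix y assume y: "y \<in> T \<inter> f ` carrier M"
      then obtain x' where x': "x' \<in> carrier M" "y = f x'" by blast
      from y have "y \<in> T" by blast
      then obtain x j where "x \<in> W"
        "\<forall>x''\<in>carrier M. f x'' \<ominus>\<^bsub>N\<^esub> f x \<in> U j \<longrightarrow> x'' \<in> W" "y \<ominus>\<^bsub>N\<^esub> f x \<in> U j"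
        unfolding T_def by blast
      hence "x' \<in> W" using x' by simp
      thus "y \<in> f ` W" using x' by simp
    qed
  qed
  thus ?thesis unfolding openin_subtopology using To by blast
qed

lemma open_image_imp_rel:
  assumes op: "\<And>W. openin TM W \<Longrightarrow> openin (subtopology TN (f ` carrier M)) (f ` W)"
    and inj: "inj_on f (carrier M)"
  shows "\<exists>j. \<forall>x\<in>carrier M. f x \<in> U j \<longrightarrow> x \<in> V n"
proof -
  obtain T where T: "openin TN T" "f ` V n = T \<inter> f ` carrier M"
    using op[OF V_open] unfolding openin_subtopology by blast
  have "\<zero>\<^bsub>N\<^esub> \<in> f ` V n" using image_eqI[of "\<zero>\<^bsub>N\<^esub>" f "\<zero>\<^bsub>M\<^esub>" "V n"] f0 M.U0[of n] by simp
  hence "\<zero>\<^bsub>N\<^esub> \<in> T" using T(2) by simp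
  then obtain j where j: "\<forall>y\<in>carrier N. y \<ominus>\<^bsub>N\<^esub> \<zero>\<^bsub>N\<^esub> \<in> U j \<longrightarrow> y \<in> T" using T(1) unfolding N.opn by blast
  have "x \<in> V n" if x: "x \<in> carrier M" "f x \<in> U j" for x
  proof -
    have "f x \<in> T" using j x fcar N.sub_zero by simp
    moreover have "f x \<in> f ` carrier M" using x by simp
    ultimately have "f x \<in> f ` V n" using T(2) by simp
    then obtain v where v: "v \<in> V n" "f x = f v" by blast
    moreover have "v \<in> carrier M" using v M.Ucar by blast
    ultimately have "x = v" using inj x(1) unfolding inj_on_def by blast
    thus ?thesis using v by simp
  qed
  thus ?thesis by blast
qed

lemma retract_ex:
  assumes inj: "inj_on f (carrier M)" and rel: "\<And>n. \<exists>j. \<forall>x\<in>carrier M. f x \<in> U j \<longrightarrow> x \<in> V n"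
  shows "\<exists>r. continuous_map TN TM r \<and> (\<forall>x\<in>carrier M. r (f x) = x)"
proof -
  define F where "F = f ` carrier M"
  have Fc: "F \<subseteq> carrier N" using F_def fcar by blast
  obtain jr where jr: "\<And>n. \<forall>x\<in>carrier M. f x \<in> U (jr n) \<longrightarrow> x \<in> V n" using rel by metis
  have closed: "y \<in> F" if y: "y \<in> carrier N" "\<forall>i. \<exists>a\<in>F. a \<ominus>\<^bsub>N\<^esub> y \<in> U i" for y
  proof -
    define j2 where "j2 n = n + (\<Sum>k\<le>n. jr k)" for n
    have jge: "n \<le> j2 n" "jr n \<le> j2 n" for n
    proof -
      have "jr n \<le> (\<Sum>k\<le>n. jr k)" by (rule member_le_sum) auto
      thus "n \<le> j2 n" "jr n \<le> j2 n" unfolding j2_def by auto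
    qed
    have jmono: "mono j2" unfolding j2_def mono_def
      by (auto intro!: add_mono sum_mono2)
    have "\<forall>k. \<exists>x. x \<in> carrier M \<and> f x \<ominus>\<^bsub>N\<^esub> y \<in> U (j2 k)" using y(2) F_def by blast
    then obtain xs where xs: "\<And>k. xs k \<in> carrier M" "\<And>k. f (xs k) \<ominus>\<^bsub>N\<^esub> y \<in> U (j2 k)" by metis
    have cau: "xs l \<ominus>\<^bsub>M\<^esub> xs k \<in> V k" if "k \<le> l" for k l
    proof -
      have "j2 k \<le> j2 l" using jmono that by (simp add: monoD)
      hence a: "f (xs l) \<ominus>\<^bsub>N\<^esub> y \<in> U (j2 k)" using N.Umono xs(2)[of l] by blast
      have "f (xs l) \<ominus>\<^bsub>N\<^esub> f (xs k) = (f (xs l) \<ominus>\<^bsub>N\<^esub> y) \<ominus>\<^bsub>N\<^esub> (f (xs k) \<ominus>\<^bsub>N\<^esub> y)"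
        using N.sub_sub_cancel fcar xs(1) y(1) by simp
      hence "f (xs l) \<ominus>\<^bsub>N\<^esub> f (xs k) \<in> U (j2 k)" using N.U_sub[OF a xs(2)[of k]] by simp
      hence "f (xs l \<ominus>\<^bsub>M\<^esub> xs k) \<in> U (j2 k)" using fsub[OF xs(1) xs(1)] by simp
      hence "f (xs l \<ominus>\<^bsub>M\<^esub> xs k) \<in> U (jr k)" using N.Umono[OF jge(2)[of k]] by blast
      thus ?thesis using jr xs(1) by blast
    qed
    obtain x where x: "x \<in> carrier M" "\<And>k. x \<ominus>\<^bsub>M\<^esub> xs k \<in> V (id k)"
      using M.compl_gen[of xs id] xs(1) cau by auto
    have "f x \<ominus>\<^bsub>N\<^esub> y \<in> U i" for i
    proof -
      obtain m where m: "\<forall>x\<in>V m. f x \<in> U i" using fcont by blast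
      define k where "k = max m i"
      have "x \<ominus>\<^bsub>M\<^esub> xs k \<in> V m" using x(2)[of k] M.Umono[of m k] k_def by simp
      hence a: "f (x \<ominus>\<^bsub>M\<^esub> xs k) \<in> U i" using m by blast
      have b: "f (xs k) \<ominus>\<^bsub>N\<^esub> y \<in> U i" using xs(2)[of k] N.Umono[of i "j2 k"] jge(1)[of k] k_def by simp
      have "f x \<ominus>\<^bsub>N\<^esub> y = f (x \<ominus>\<^bsub>M\<^esub> xs k) \<oplus>\<^bsub>N\<^esub> (f (xs k) \<ominus>\<^bsub>N\<^esub> y)"
        using N.sub_trans[of "f x" "f (xs k)" y] fsub x(1) xs(1) fcar y(1) by simp
      thus ?thesis using N.Uadd[OF a b] by simp
    qed
    hence "f x \<ominus>\<^bsub>N\<^esub> y = \<zero>\<^bsub>N\<^esub>" using N.haus[of "f x \<ominus>\<^bsub>N\<^esub> y"] fcar[OF x(1)] y(1) by simp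
    hence "f x = y" using N.sub_eq_zero[OF fcar[OF x(1)] y(1)] by simp
    thus ?thesis using x F_def by blast
  qed
  define Q where "Q y n \<longleftrightarrow> (\<exists>a\<in>F. a \<ominus>\<^bsub>N\<^esub> y \<in> U n)" for y n
  have Qdown: "Q y m" if Qn: "Q y n" and mn: "m \<le> n" for y m n
  proof -
    obtain a where "a \<in> F" "a \<ominus>\<^bsub>N\<^esub> y \<in> U n" using Qn unfolding Q_def by blast
    thus ?thesis using N.Umono[OF mn] unfolding Q_def by blast
  qed
  define nn where "nn y = (LEAST m. \<not> Q y (Suc m))" for y
  define rho where "rho y = (if y \<in> F then y else if Q y 0 then (SOME a. a \<in> F \<and> a \<ominus>\<^bsub>N\<^esub> y \<in> U (nn y))
      else f \<zero>\<^bsub>M\<^esub>)" for y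
  have exnq: "\<exists>m. \<not> Q y (Suc m)" if "y \<in> carrier N" "y \<notin> F" for y
  proof -
    have "\<not> (\<forall>i. \<exists>a\<in>F. a \<ominus>\<^bsub>N\<^esub> y \<in> U i)" using closed[OF that(1)] that(2) by blast
    then obtain i where "\<not> Q y i" unfolding Q_def by blast
    hence "\<not> Q y (Suc i)" using Qdown[of y "Suc i" i] by fastforce
    thus ?thesis by blast
  qed
  have nnQ: "Q y (nn y)" "\<not> Q y (Suc (nn y))" if "y \<in> carrier N" "y \<notin> F" "Q y 0" for y
  proof -
    show "\<not> Q y (Suc (nn y))" unfolding nn_def using LeastI_ex[OF exnq[OF that(1,2)]] .
    show "Q y (nn y)"
    proof (cases "nn y")
      case 0 thus ?thesis using that by simp
    next
      case (Suc m)
      hence "m < nn y" by simp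
      thus ?thesis using not_less_Least[of m "\<lambda>m. \<not> Q y (Suc m)"] Suc unfolding nn_def by auto
    qed
  qed
  have nnge: "j \<le> nn y" if "y \<in> carrier N" "y \<notin> F" "Q y j" for y j
  proof (rule ccontr)
    assume "\<not> j \<le> nn y"
    hence "Suc (nn y) \<le> j" by simp
    thus False using Qdown[OF that(3)] nnQ(2)[OF that(1,2)] Qdown[OF that(3), of 0] by blast
  qed
  have rhoF: "rho y \<in> F" if "y \<in> carrier N" for y
  proof -
    have "(SOME a. a \<in> F \<and> a \<ominus>\<^bsub>N\<^esub> y \<in> U (nn y)) \<in> F \<and>
          (SOME a. a \<in> F \<and> a \<ominus>\<^bsub>N\<^esub> y \<in> U (nn y)) \<ominus>\<^bsub>N\<^esub> y \<in> U (nn y)" if "y \<notin> F" "Q y 0"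
    proof -
      have "\<exists>a. a \<in> F \<and> a \<ominus>\<^bsub>N\<^esub> y \<in> U (nn y)" using nnQ(1)[OF \<open>y \<in> carrier N\<close> that] unfolding Q_def by blast
      thus ?thesis by (rule someI_ex)
    qed
    thus ?thesis unfolding rho_def F_def using M.zero_closed by auto
  qed
  define r where "r y = inv_into (carrier M) f (rho y)" for y
  have rc: "r y \<in> carrier M" "f (r y) = rho y" if "y \<in> carrier N" for y
    using rhoF[OF that] unfolding r_def F_def by (auto intro: inv_into_into f_inv_into_f)
  have rf: "r (f x) = x" if "x \<in> carrier M" for x
    using that inj unfolding r_def rho_def F_def by (simp add: inv_into_f_f)
  have "continuous_map TN TM r"
  proof (rule cont_from)
    show "\<And>x. x \<in> carrier N \<Longrightarrow> r x \<in> carrier M" using rc by blast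
    fix y n assume y: "y \<in> carrier N"
    show "\<exists>m. \<forall>y'\<in>carrier N. y' \<ominus>\<^bsub>N\<^esub> y \<in> U m \<longrightarrow> r y' \<ominus>\<^bsub>M\<^esub> r y \<in> V n"
    proof (cases "y \<in> F")
      case True
      then obtain x0 where x0: "x0 \<in> carrier M" "y = f x0" unfolding F_def by blast
      have ry: "r y = x0" using rf x0 by simp
      define j where "j = jr n"
      have "r y' \<ominus>\<^bsub>M\<^esub> r y \<in> V n" if y': "y' \<in> carrier N" "y' \<ominus>\<^bsub>N\<^esub> y \<in> U j" for y'
      proof -
        have "rho y' \<ominus>\<^bsub>N\<^esub> y \<in> U j"
        proof (cases "y' \<in> F")
          case True thus ?thesis using y' rho_def by simp
        next
          case False
          have Qj: "Q y' j" unfolding Q_def using True N.near_sym[OF y y'(1) y'(2)] by blast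
          hence Q0: "Q y' 0" using Qdown by blast
          have jle: "j \<le> nn y'" using nnge[OF y'(1) False Qj] .
          have ex: "\<exists>a. a \<in> F \<and> a \<ominus>\<^bsub>N\<^esub> y' \<in> U (nn y')" using nnQ(1)[OF y'(1) False Q0] unfolding Q_def by blast
          have a: "rho y' \<in> F" "rho y' \<ominus>\<^bsub>N\<^esub> y' \<in> U (nn y')"
            unfolding rho_def using False Q0 someI_ex[OF ex] by auto
          have "rho y' \<ominus>\<^bsub>N\<^esub> y' \<in> U j" using a(2) N.Umono jle by blast
          thus ?thesis using N.near_trans[OF y y'(1) _ _ y'(2)] a(1) Fc by blast
        qed
        hence "f (r y') \<ominus>\<^bsub>N\<^esub> f x0 \<in> U j" using rc[OF y'(1)] x0 by simp
        hence "f (r y' \<ominus>\<^bsub>M\<^esub> x0) \<in> U (jr n)" using fsub rc[OF y'(1)] x0 j_def by simp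
        hence "r y' \<ominus>\<^bsub>M\<^esub> x0 \<in> V n" using jr rc[OF y'(1)] x0 by blast
        thus ?thesis using ry by simp
      qed
      thus ?thesis by blast
    next
      case False
      define j where "j = (if Q y 0 then Suc (nn y) else 0)"
      have "rho y' = rho y" if y': "y' \<in> carrier N" "y' \<ominus>\<^bsub>N\<^esub> y \<in> U j" for y'
      proof -
        have QQ: "Q y' m \<longleftrightarrow> Q y m" if "m \<le> j" for m
        proof -
          have d: "y' \<ominus>\<^bsub>N\<^esub> y \<in> U m" using y'(2) N.Umono that by blast
          have d': "y \<ominus>\<^bsub>N\<^esub> y' \<in> U m" using N.near_sym[OF y y'(1) d] .
          show ?thesis unfolding Q_def
            using N.near_trans[OF y y'(1) _ _ d] N.near_trans[OF y'(1) y _ _ d'] Fc by blast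
        qed
        have nF: "y' \<notin> F"
        proof
          assume "y' \<in> F"
          hence "Q y j" unfolding Q_def using y'(2) by blast
          show False
          proof (cases "Q y 0")
            case True
            hence "Q y (Suc (nn y))" using \<open>Q y j\<close> j_def by simp
            thus False using nnQ(2)[OF y False True] by blast
          next
            case False3: False
            hence "j = 0" using j_def by simp
            thus False using \<open>Q y j\<close> False3 by simp
          qed
        qed
        show ?thesis
        proof (cases "Q y 0")
          case False2: False
          hence "\<not> Q y' 0" using QQ[of 0] by simp
          thus ?thesis unfolding rho_def using nF False False2 by simp
        next
          case True
          have jj: "j = Suc (nn y)" using True j_def by simp
          have Q0: "Q y' 0" using QQ[of 0] True by simp
          have "nn y' = nn y"
            unfolding nn_def
          proof (rule Least_equality)
            show "\<not> Q y' (Suc (LEAST m. \<not> Q y (Suc m)))"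
              using QQ[of "Suc (nn y)"] jj nnQ(2)[OF y False True] unfolding nn_def by simp
            fix m assume m: "\<not> Q y' (Suc m)"
            show "(LEAST m. \<not> Q y (Suc m)) \<le> m"
            proof (rule ccontr)
              assume "\<not> (LEAST m. \<not> Q y (Suc m)) \<le> m"
              hence lt: "m < nn y" unfolding nn_def by simp
              hence "Q y (Suc m)" using not_less_Least[of m "\<lambda>m. \<not> Q y (Suc m)"] unfolding nn_def by auto
              thus False using QQ[of "Suc m"] lt jj m by simp
            qed
          qed
          moreover have "(\<lambda>a. a \<in> F \<and> a \<ominus>\<^bsub>N\<^esub> y' \<in> U (nn y)) = (\<lambda>a. a \<in> F \<and> a \<ominus>\<^bsub>N\<^esub> y \<in> U (nn y))"
          proof (intro ext iffI conjI)
            have d: "y' \<ominus>\<^bsub>N\<^esub> y \<in> U (nn y)" using y'(2) N.Umono jj by (metis le_SucI order_refl)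
            have d': "y \<ominus>\<^bsub>N\<^esub> y' \<in> U (nn y)" using N.near_sym[OF y y'(1) d] .
            fix a
            show "a \<in> F \<and> a \<ominus>\<^bsub>N\<^esub> y' \<in> U (nn y) \<Longrightarrow> a \<in> F" by blast
            show "a \<in> F \<and> a \<ominus>\<^bsub>N\<^esub> y \<in> U (nn y) \<Longrightarrow> a \<in> F" by blast
            show "a \<in> F \<and> a \<ominus>\<^bsub>N\<^esub> y' \<in> U (nn y) \<Longrightarrow> a \<ominus>\<^bsub>N\<^esub> y \<in> U (nn y)"
              using N.near_trans[OF y y'(1) _ _ d] Fc by blast
            show "a \<in> F \<and> a \<ominus>\<^bsub>N\<^esub> y \<in> U (nn y) \<Longrightarrow> a \<ominus>\<^bsub>N\<^esub> y' \<in> U (nn y)"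
              using N.near_trans[OF y'(1) y _ _ d'] Fc by blast
          qed
          ultimately show ?thesis unfolding rho_def using nF False True Q0 by simp
        qed
      qed
      have "r y' \<ominus>\<^bsub>M\<^esub> r y \<in> V n" if yy: "y' \<in> carrier N" "y' \<ominus>\<^bsub>N\<^esub> y \<in> U j" for y'
      proof -
        have "r y' = r y" unfolding r_def using \<open>\<And>y'. y' \<in> carrier N \<Longrightarrow> y' \<ominus>\<^bsub>N\<^esub> y \<in> U j \<Longrightarrow> rho y' = rho y\<close>[OF yy] by simp
        thus ?thesis using M.sub_self[OF rc(1)[OF y]] M.U0 by simp
      qed
      thus ?thesis by blast
    qed
  qed
  thus ?thesis using rf by blast
qed

end

lemma Q_istop: "istopology (\<lambda>P. P \<subseteq> mod_coset M K ` carrier M \<and> openin TM {x\<in>carrier M. mod_coset M K x \<in> P})"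
  unfolding istopology_def
proof (rule conjI; intro allI impI)
  fix S T assume S: "S \<subseteq> mod_coset M K ` carrier M \<and> openin TM {x\<in>carrier M. mod_coset M K x \<in> S}"
    and T: "T \<subseteq> mod_coset M K ` carrier M \<and> openin TM {x\<in>carrier M. mod_coset M K x \<in> T}"
  have "{x\<in>carrier M. mod_coset M K x \<in> S \<inter> T} = {x\<in>carrier M. mod_coset M K x \<in> S} \<inter> {x\<in>carrier M. mod_coset M K x \<in> T}"
    by blast
  moreover have "openin TM ({x\<in>carrier M. mod_coset M K x \<in> S} \<inter> {x\<in>carrier M. mod_coset M K x \<in> T})"
    using S T by (intro openin_Int) auto
  ultimately show "S \<inter> T \<subseteq> mod_coset M K ` carrier M \<and> openin TM {x\<in>carrier M. mod_coset M K x \<in> S \<inter> T}"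
    using S by auto
next
  fix KK assume A: "\<forall>P\<in>KK. P \<subseteq> mod_coset M K ` carrier M \<and> openin TM {x\<in>carrier M. mod_coset M K x \<in> P}"
  have "{x\<in>carrier M. mod_coset M K x \<in> \<Union>KK} = (\<Union>P\<in>KK. {x\<in>carrier M. mod_coset M K x \<in> P})" by blast
  moreover have "openin TM (\<Union>P\<in>KK. {x\<in>carrier M. mod_coset M K x \<in> P})"
    by (rule openin_Union) (use A in auto)
  ultimately show "\<Union>KK \<subseteq> mod_coset M K ` carrier M \<and> openin TM {x\<in>carrier M. mod_coset M K x \<in> \<Union>KK}"
    using A by auto
qed

lemma Q_open: "openin (quotient_mod_topology M TM K) P \<longleftrightarrow>
   P \<subseteq> mod_coset M K ` carrier M \<and> openin TM {x\<in>carrier M. mod_coset M K x \<in> P}"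
  unfolding quotient_mod_topology_def topology_inverse'[OF Q_istop] by simp

lemma Q_top: assumes "topspace TM = carrier M"
  shows "topspace (quotient_mod_topology M TM K) = mod_coset M K ` carrier M"
proof
  show "topspace (quotient_mod_topology M TM K) \<subseteq> mod_coset M K ` carrier M"
    unfolding topspace_def Q_open by blast
  have "openin (quotient_mod_topology M TM K) (mod_coset M K ` carrier M)"
  proof -
    have "{x\<in>carrier M. mod_coset M K x \<in> mod_coset M K ` carrier M} = topspace TM" using assms by auto
    thus ?thesis unfolding Q_open by simp
  qed
  thus "mod_coset M K ` carrier M \<subseteq> topspace (quotient_mod_topology M TM K)"
    by (rule openin_subset)
qed

context tdmap begin

lemma strict_from_open:
  assumes cont: "continuous_map TM TN f"
    and op: "\<And>W. openin TM W \<Longrightarrow> openin (subtopology TN (f ` carrier M)) (f ` W)"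
  shows "strict_map M TM N TN f"
proof -
  define K where "K = mod_kernel M N f"
  define cos where "cos = mod_coset M K"
  define g where "g = induced_map f"
  define F where "F = f ` carrier M"
  define Y where "Y = subtopology TN F"
  define Q where "Q = quotient_mod_topology M TM K"
  have K: "k \<in> carrier M" "f k = \<zero>\<^bsub>N\<^esub>" if "k \<in> K" for k
    using that unfolding K_def mod_kernel_def by auto
  have K0: "\<zero>\<^bsub>M\<^esub> \<in> K" unfolding K_def mod_kernel_def using f0 by simp
  have cos_mem: "z \<in> cos x \<longleftrightarrow> (\<exists>k. z = x \<oplus>\<^bsub>M\<^esub> k \<and> k \<in> K)" for z x
    unfolding cos_def mod_coset_def by blast
  have self: "x \<in> cos x" if "x \<in> carrier M" for x
    using cos_mem[of x x] K0 that by auto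
  have fz: "f z = f x" if xz: "x \<in> carrier M" "z \<in> cos x" for x z
  proof -
    obtain k where k: "z = x \<oplus>\<^bsub>M\<^esub> k" "k \<in> K" using cos_mem xz(2) by blast
    thus ?thesis using fadd[OF xz(1) K(1)[OF k(2)]] K(2)[OF k(2)] fcar xz(1) by simp
  qed
  have gcos: "g (cos x) = f x" if "x \<in> carrier M" for x
  proof -
    have "(SOME z. z \<in> cos x) \<in> cos x" using self[OF that] by (rule someI)
    thus ?thesis unfolding g_def induced_map_def using fz[OF that] by simp
  qed
  have cos_sub: "cos x \<subseteq> cos y" if xyf: "x \<in> carrier M" "y \<in> carrier M" "f x = f y" for x y
  proof
    fix z assume "z \<in> cos x"
    then obtain k where k: "z = x \<oplus>\<^bsub>M\<^esub> k" "k \<in> K" using cos_mem by blast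
    have kc: "k \<in> carrier M" using K k by blast
    have xy: "x \<ominus>\<^bsub>M\<^esub> y \<in> carrier M" using xyf by simp
    have "f ((x \<ominus>\<^bsub>M\<^esub> y) \<oplus>\<^bsub>M\<^esub> k) = \<zero>\<^bsub>N\<^esub>"
      using fadd[OF xy kc] fsub[OF xyf(1,2)] xyf(3) K(2)[OF k(2)] N.sub_self fcar xyf(2) by simp
    hence "(x \<ominus>\<^bsub>M\<^esub> y) \<oplus>\<^bsub>M\<^esub> k \<in> K" unfolding K_def mod_kernel_def using xy kc by simp
    moreover have "z = y \<oplus>\<^bsub>M\<^esub> ((x \<ominus>\<^bsub>M\<^esub> y) \<oplus>\<^bsub>M\<^esub> k)" using k(1) M.coset_shift[OF xyf(1,2) kc] by simp
    ultimately show "z \<in> cos y" using cos_mem by blast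
  qed
  have QT: "topspace Q = cos ` carrier M" unfolding Q_def cos_def using Q_top M.top by blast
  have YT: "topspace Y = F" unfolding Y_def F_def using fcar N.top by auto
  have Qo: "openin Q P \<longleftrightarrow> P \<subseteq> cos ` carrier M \<and> openin TM {x\<in>carrier M. cos x \<in> P}" for P
    unfolding Q_def cos_def by (rule Q_open)
  have "homeomorphic_map Q Y g"
  proof (rule bijective_open_imp_homeomorphic_map)
    show "continuous_map Q Y g"
      unfolding continuous_map_def
    proof (intro conjI allI impI)
      show "g \<in> topspace Q \<rightarrow> topspace Y"
      proof
        fix C assume "C \<in> topspace Q"
        then obtain x where x: "x \<in> carrier M" "C = cos x" using QT by blast
        thus "g C \<in> topspace Y" using gcos[OF x(1)] YT F_def by simp
      qed
      fix P assume P: "openin Y P"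
      have cY: "continuous_map TM Y f" unfolding Y_def F_def
        by (rule continuous_map_into_subtopology[OF cont]) (use M.top in blast)
      have "openin TM {x \<in> topspace TM. f x \<in> P}" by (rule openin_continuous_map_preimage[OF cY P])
      moreover have "{x\<in>carrier M. cos x \<in> {C \<in> topspace Q. g C \<in> P}} = {x \<in> topspace TM. f x \<in> P}"
      proof (intro Collect_cong)
        fix x show "(x \<in> carrier M \<and> cos x \<in> {C \<in> topspace Q. g C \<in> P}) = (x \<in> topspace TM \<and> f x \<in> P)"
          using QT gcos[of x] M.top by auto
      qed
      ultimately have "openin TM {x\<in>carrier M. cos x \<in> {C \<in> topspace Q. g C \<in> P}}" by simp
      moreover have "{C \<in> topspace Q. g C \<in> P} \<subseteq> cos ` carrier M" using QT by blast
      ultimately show "openin Q {C \<in> topspace Q. g C \<in> P}" unfolding Qo by blast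
    qed
    show "open_map Q Y g"
      unfolding open_map_def
    proof (intro allI impI)
      fix P assume P: "openin Q P"
      have Ps: "P \<subseteq> cos ` carrier M" and Po: "openin TM {x\<in>carrier M. cos x \<in> P}"
        using P unfolding Qo by blast+
      have "g ` P = f ` {x\<in>carrier M. cos x \<in> P}"
      proof
        show "g ` P \<subseteq> f ` {x\<in>carrier M. cos x \<in> P}"
        proof
          fix w assume "w \<in> g ` P"
          then obtain C where C: "C \<in> P" "w = g C" by blast
          then obtain x where x: "x \<in> carrier M" "C = cos x" using Ps by blast
          have "w = f x" using C x gcos by simp
          thus "w \<in> f ` {x\<in>carrier M. cos x \<in> P}" using x C by blast
        qed
        show "f ` {x\<in>carrier M. cos x \<in> P} \<subseteq> g ` P"
        proof
          fix w assume "w \<in> f ` {x\<in>carrier M. cos x \<in> P}"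
          then obtain x where x: "x \<in> carrier M" "cos x \<in> P" "w = f x" by blast
          have "w = g (cos x)" using gcos[OF x(1)] x(3) by simp
          thus "w \<in> g ` P" using x(2) by blast
        qed
      qed
      thus "openin Y (g ` P)" using op[OF Po] unfolding Y_def F_def by simp
    qed
    show "g ` topspace Q = topspace Y"
    proof -
      have "g ` topspace Q = (\<lambda>x. g (cos x)) ` carrier M" unfolding QT by (simp add: image_image)
      also have "\<dots> = f ` carrier M" by (rule image_cong) (simp_all add: gcos)
      finally have "g ` topspace Q = f ` carrier M" .
      thus ?thesis using YT F_def by simp
    qed
    show "inj_on g (topspace Q)"
      unfolding QT inj_on_def
    proof (intro ballI impI)
      fix C D assume C: "C \<in> cos ` carrier M" and D: "D \<in> cos ` carrier M" and e: "g C = g D"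
      obtain x where x: "x \<in> carrier M" "C = cos x" using C by blast
      obtain y where y: "y \<in> carrier M" "D = cos y" using D by blast
      have "f x = f y" using e x y gcos by simp
      hence "cos x \<subseteq> cos y" "cos y \<subseteq> cos x" using cos_sub[OF x(1) y(1)] cos_sub[OF y(1) x(1)] by auto
      thus "C = D" using x(2) y(2) by simp
    qed
  qed
  thus ?thesis unfolding strict_map_def Q_def Y_def g_def F_def K_def by simp
qed

lemma strict_imp_open:
  assumes inj: "inj_on f (carrier M)" and st: "strict_map M TM N TN f" and W: "openin TM W"
  shows "openin (subtopology TN (f ` carrier M)) (f ` W)"
proof -
  define K where "K = mod_kernel M N f"
  define cos where "cos = mod_coset M K"
  define Q where "Q = quotient_mod_topology M TM K"
  have K: "K = {\<zero>\<^bsub>M\<^esub>}"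
  proof
    show "K \<subseteq> {\<zero>\<^bsub>M\<^esub>}"
    proof
      fix k assume "k \<in> K"
      hence "k \<in> carrier M" "f k = f \<zero>\<^bsub>M\<^esub>" unfolding K_def mod_kernel_def using f0 by auto
      thus "k \<in> {\<zero>\<^bsub>M\<^esub>}" using inj unfolding inj_on_def by simp
    qed
    show "{\<zero>\<^bsub>M\<^esub>} \<subseteq> K" unfolding K_def mod_kernel_def using f0 by simp
  qed
  have cosx: "cos x = {x}" if "x \<in> carrier M" for x
    unfolding cos_def mod_coset_def K using that by simp
  have Wc: "W \<subseteq> carrier M" using W M.opn by blast
  have om: "open_map Q (subtopology TN (f ` carrier M)) (induced_map f)"
    using st homeomorphic_imp_open_map unfolding strict_map_def Q_def K_def by blast
  have "{x\<in>carrier M. cos x \<in> cos ` W} = W"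
  proof
    show "{x\<in>carrier M. cos x \<in> cos ` W} \<subseteq> W"
    proof
      fix x assume "x \<in> {x\<in>carrier M. cos x \<in> cos ` W}"
      then obtain w where "x \<in> carrier M" "w \<in> W" "cos x = cos w" by blast
      thus "x \<in> W" using cosx Wc by auto
    qed
    show "W \<subseteq> {x\<in>carrier M. cos x \<in> cos ` W}" using Wc by blast
  qed
  hence "openin Q (cos ` W)" unfolding Q_def Q_open cos_def[symmetric] using W Wc by auto
  hence "openin (subtopology TN (f ` carrier M)) (induced_map f ` cos ` W)" using om unfolding open_map_def by blast
  moreover have "induced_map f ` cos ` W = f ` W"
  proof -
    have "induced_map f (cos x) = f x" if "x \<in> W" for x
      using cosx[of x] that Wc unfolding induced_map_def by auto
    thus ?thesis by (auto simp: image_iff)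
  qed
  ultimately show ?thesis by simp
qed

end

lemma hom_zero:
  assumes M: "abelian_group M" and N: "abelian_group N"
    and fcar: "\<And>x. x \<in> carrier M \<Longrightarrow> f x \<in> carrier N"
    and fadd: "\<And>x y. x \<in> carrier M \<Longrightarrow> y \<in> carrier M \<Longrightarrow> f (x \<oplus>\<^bsub>M\<^esub> y) = f x \<oplus>\<^bsub>N\<^esub> f y"
  shows "f \<zero>\<^bsub>M\<^esub> = \<zero>\<^bsub>N\<^esub>"
proof -
  interpret M: abelian_group M by (rule M)
  interpret N: abelian_group N by (rule N)
  have "f \<zero>\<^bsub>M\<^esub> = f \<zero>\<^bsub>M\<^esub> \<oplus>\<^bsub>N\<^esub> f \<zero>\<^bsub>M\<^esub>" using fadd[of "\<zero>\<^bsub>M\<^esub>" "\<zero>\<^bsub>M\<^esub>"] by simp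
  hence "f \<zero>\<^bsub>M\<^esub> \<ominus>\<^bsub>N\<^esub> f \<zero>\<^bsub>M\<^esub> = f \<zero>\<^bsub>M\<^esub>"
    using N.add_sub_cancel[of "f \<zero>\<^bsub>M\<^esub>" "f \<zero>\<^bsub>M\<^esub>"] fcar by simp
  thus ?thesis using N.sub_self fcar by simp
qed

lemma td_tdg:
  fixes M :: "('r, 'm) module"
  assumes td: "td_module R TR M TM"
  shows "\<exists>V. tdg M TM V"
proof -
  have tm: "topological_module R TR M TM" and H: "Hausdorff_space TM" and C: "complete_module_top M TM"
    and B: "\<And>U. openin TM U \<Longrightarrow> \<zero>\<^bsub>M\<^esub> \<in> U \<Longrightarrow> \<exists>V. left_submodule R M V \<and> openin TM V \<and> V \<subseteq> U"
    and sc: "second_countable TM"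
    using td unfolding td_module_def by blast+
  have lm: "left_module R M" and top: "topspace TM = carrier M"
    and addc: "continuous_map (prod_topology TM TM) TM (\<lambda>(x, y). x \<oplus>\<^bsub>M\<^esub> y)"
    using tm unfolding topological_module_def by blast+
  have ag: "abelian_group M" using lm unfolding left_module_def by blast
  interpret M: abelian_group M by (rule ag)
  have trc: "continuous_map TM TM (\<lambda>z. a \<oplus>\<^bsub>M\<^esub> z)" if a: "a \<in> carrier M" for a
  proof -
    have "continuous_map TM (prod_topology TM TM) (\<lambda>z. (a, z))"
      unfolding continuous_map_pairwise o_def using a top by simp
    from continuous_map_compose[OF this addc] show ?thesis by (simp add: o_def)
  qed
  have pre: "openin TM {z \<in> carrier M. a \<oplus>\<^bsub>M\<^esub> z \<in> W}" if "a \<in> carrier M" "openin TM W" for a W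
    using openin_continuous_map_preimage[OF trc[OF that(1)] that(2)] top by simp
  from sc obtain BB where BB0: "countable BB \<and> (\<forall>V\<in>BB. openin TM V) \<and>
      (\<forall>U x. openin TM U \<and> x \<in> U \<longrightarrow> (\<exists>V\<in>BB. x \<in> V \<and> V \<subseteq> U))"
    unfolding second_countable_def by blast
  have BB: "countable BB" "\<And>V. V \<in> BB \<Longrightarrow> openin TM V"
    "\<And>U x. openin TM U \<Longrightarrow> x \<in> U \<Longrightarrow> \<exists>V\<in>BB. x \<in> V \<and> V \<subseteq> U"
    using BB0 by blast+
  define B0 where "B0 = {b\<in>BB. \<zero>\<^bsub>M\<^esub> \<in> b}"
  have B0c: "countable B0" using BB(1) B0_def by simp
  have "openin TM (carrier M)" using top by (metis openin_topspace)
  then obtain b where "b \<in> BB" "\<zero>\<^bsub>M\<^esub> \<in> b" using BB(3) M.zero_closed by blast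
  hence B0ne: "B0 \<noteq> {}" using B0_def by blast
  define bb where "bb k = from_nat_into B0 k" for k
  have bbB: "bb k \<in> B0" for k using B0ne bb_def from_nat_into by metis
  have "\<forall>k. \<exists>W. left_submodule R M W \<and> openin TM W \<and> W \<subseteq> bb k"
  proof
    fix k have "openin TM (bb k)" "\<zero>\<^bsub>M\<^esub> \<in> bb k" using bbB[of k] BB(2) B0_def by auto
    thus "\<exists>W. left_submodule R M W \<and> openin TM W \<and> W \<subseteq> bb k" using B by blast
  qed
  hence "\<exists>Wk. \<forall>k. left_submodule R M (Wk k) \<and> openin TM (Wk k) \<and> Wk k \<subseteq> bb k" by (rule choice)
  then obtain Wk where Wk0: "\<forall>k. left_submodule R M (Wk k) \<and> openin TM (Wk k) \<and> Wk k \<subseteq> bb k" by blast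
  have Wk: "\<And>k. left_submodule R M (Wk k)" "\<And>k. openin TM (Wk k)" "\<And>k. Wk k \<subseteq> bb k" using Wk0 by blast+
  define V where "V n = (\<Inter>k\<in>{..n}. Wk k)" for n
  have Wsub: "Wk k \<subseteq> carrier M" "\<zero>\<^bsub>M\<^esub> \<in> Wk k" "\<And>x y. x \<in> Wk k \<Longrightarrow> y \<in> Wk k \<Longrightarrow> x \<oplus>\<^bsub>M\<^esub> y \<in> Wk k"
      "\<And>x. x \<in> Wk k \<Longrightarrow> \<ominus>\<^bsub>M\<^esub> x \<in> Wk k" for k
    using Wk(1)[of k] unfolding left_submodule_def by blast+
  have Vsub: "V n \<subseteq> carrier M" for n using Wsub(1)[of 0] unfolding V_def by blast
  have V0: "\<zero>\<^bsub>M\<^esub> \<in> V n" for n using Wsub(2) unfolding V_def by blast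
  have Vadd: "x \<in> V n \<Longrightarrow> y \<in> V n \<Longrightarrow> x \<oplus>\<^bsub>M\<^esub> y \<in> V n" for x y n using Wsub(3) unfolding V_def by blast
  have Vneg: "x \<in> V n \<Longrightarrow> \<ominus>\<^bsub>M\<^esub> x \<in> V n" for x n using Wsub(4) unfolding V_def by blast
  have Vdec: "m \<le> n \<Longrightarrow> V n \<subseteq> V m" for m n unfolding V_def by auto
  have Vopen: "openin TM (V n)" for n unfolding V_def by (intro openin_INT2) (simp_all add: Wk(2))
  have Vbasis: "\<exists>n. V n \<subseteq> U" if UU: "openin TM U" "\<zero>\<^bsub>M\<^esub> \<in> U" for U
  proof -
    obtain b where b: "b \<in> BB" "\<zero>\<^bsub>M\<^esub> \<in> b" "b \<subseteq> U" using BB(3)[OF UU] by blast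
    hence bB: "b \<in> B0" using B0_def by blast
    obtain k where "from_nat_into B0 k = b" using from_nat_into_surj[OF B0c bB] by blast
    hence "bb k = b" using bb_def by simp
    moreover have "V k \<subseteq> Wk k" unfolding V_def by (intro INT_lower) simp
    ultimately have "V k \<subseteq> b" using Wk(3)[of k] by blast
    thus ?thesis using b by blast
  qed
  have ball: "openin TM {y\<in>carrier M. y \<ominus>\<^bsub>M\<^esub> x \<in> V n}" if x: "x \<in> carrier M" for x n
  proof -
    have "{y\<in>carrier M. y \<ominus>\<^bsub>M\<^esub> x \<in> V n} = {z \<in> carrier M. \<ominus>\<^bsub>M\<^esub> x \<oplus>\<^bsub>M\<^esub> z \<in> V n}"
    proof (intro Collect_cong conj_cong refl)
      fix y assume "y \<in> carrier M"
      hence "y \<ominus>\<^bsub>M\<^esub> x = \<ominus>\<^bsub>M\<^esub> x \<oplus>\<^bsub>M\<^esub> y" using x M.minus_eq M.a_comm[of y "\<ominus>\<^bsub>M\<^esub> x"] by simp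
      thus "(y \<ominus>\<^bsub>M\<^esub> x \<in> V n) = (\<ominus>\<^bsub>M\<^esub> x \<oplus>\<^bsub>M\<^esub> y \<in> V n)" by simp
    qed
    thus ?thesis using pre[OF M.a_inv_closed[OF x] Vopen] by simp
  qed
  have opn: "openin TM W \<longleftrightarrow> W \<subseteq> carrier M \<and> (\<forall>x\<in>W. \<exists>n. \<forall>y\<in>carrier M. y \<ominus>\<^bsub>M\<^esub> x \<in> V n \<longrightarrow> y \<in> W)" for W
  proof
    assume W: "openin TM W"
    have Wc: "W \<subseteq> carrier M" using openin_subset[OF W] top by simp
    have "\<exists>n. \<forall>y\<in>carrier M. y \<ominus>\<^bsub>M\<^esub> x \<in> V n \<longrightarrow> y \<in> W" if x: "x \<in> W" for x
    proof -
      have xc: "x \<in> carrier M" using x Wc by blast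
      have "\<zero>\<^bsub>M\<^esub> \<in> {z \<in> carrier M. x \<oplus>\<^bsub>M\<^esub> z \<in> W}" using x xc by simp
      then obtain n where n: "V n \<subseteq> {z \<in> carrier M. x \<oplus>\<^bsub>M\<^esub> z \<in> W}" using Vbasis pre[OF xc W] by blast
      have "y \<in> W" if "y \<in> carrier M" "y \<ominus>\<^bsub>M\<^esub> x \<in> V n" for y
        using n that M.add_sub_cancel2[OF xc that(1)] by auto
      thus ?thesis by blast
    qed
    thus "W \<subseteq> carrier M \<and> (\<forall>x\<in>W. \<exists>n. \<forall>y\<in>carrier M. y \<ominus>\<^bsub>M\<^esub> x \<in> V n \<longrightarrow> y \<in> W)" using Wc by blast
  next
    assume A: "W \<subseteq> carrier M \<and> (\<forall>x\<in>W. \<exists>n. \<forall>y\<in>carrier M. y \<ominus>\<^bsub>M\<^esub> x \<in> V n \<longrightarrow> y \<in> W)"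
    show "openin TM W"
      unfolding openin_subopen[of TM W]
    proof
      fix x assume x: "x \<in> W"
      have xc: "x \<in> carrier M" using x A by blast
      obtain n where n: "\<forall>y\<in>carrier M. y \<ominus>\<^bsub>M\<^esub> x \<in> V n \<longrightarrow> y \<in> W" using A x by blast
      have "x \<in> {y\<in>carrier M. y \<ominus>\<^bsub>M\<^esub> x \<in> V n}" using xc M.sub_self[OF xc] V0 by simp
      moreover have "{y\<in>carrier M. y \<ominus>\<^bsub>M\<^esub> x \<in> V n} \<subseteq> W" using n by blast
      ultimately show "\<exists>T. openin TM T \<and> x \<in> T \<and> T \<subseteq> W" using ball[OF xc] by blast
    qed
  qed
  have haus: "x = \<zero>\<^bsub>M\<^esub>" if x: "x \<in> carrier M" "\<forall>n. x \<in> V n" for x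
  proof (rule ccontr)
    assume ne: "x \<noteq> \<zero>\<^bsub>M\<^esub>"
    obtain U1 U2 where U: "openin TM U1" "openin TM U2" "\<zero>\<^bsub>M\<^esub> \<in> U1" "x \<in> U2" "disjnt U1 U2"
      using H ne x(1) M.zero_closed top unfolding Hausdorff_space_def by metis
    obtain n where "V n \<subseteq> U1" using Vbasis U by blast
    thus False using x(2) U(4,5) unfolding disjnt_def by blast
  qed
  have compl: "\<exists>x\<in>carrier M. \<forall>k. x \<ominus>\<^bsub>M\<^esub> S k \<in> V k"
    if S: "\<forall>k. S k \<in> carrier M" and cau: "\<forall>k l. k \<le> l \<longrightarrow> S l \<ominus>\<^bsub>M\<^esub> S k \<in> V k" for S
  proof -
    define F where "F = filtermap S sequentially"
    have Fb: "F \<noteq> bot" unfolding F_def by (simp add: filtermap_bot_iff)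
    have Fc: "eventually (\<lambda>x. x \<in> carrier M) F" unfolding F_def eventually_filtermap using S by simp
    have Fcau: "cauchy_filter_in M TM F"
      unfolding cauchy_filter_in_def
    proof (intro allI impI)
      fix U assume "openin TM U \<and> \<zero>\<^bsub>M\<^esub> \<in> U"
      then obtain n where n: "V n \<subseteq> U" using Vbasis by blast
      define A where "A = S ` {n..}"
      have "eventually (\<lambda>x. x \<in> A) F" unfolding F_def eventually_filtermap eventually_sequentially A_def by auto
      moreover have "\<forall>x\<in>A. \<forall>y\<in>A. x \<ominus>\<^bsub>M\<^esub> y \<in> U"
      proof (intro ballI)
        fix x y assume "x \<in> A" "y \<in> A"
        then obtain k l where kl: "n \<le> k" "n \<le> l" "x = S k" "y = S l" unfolding A_def by blast
        have a: "S k \<ominus>\<^bsub>M\<^esub> S n \<in> V n" "S l \<ominus>\<^bsub>M\<^esub> S n \<in> V n" using cau kl by blast+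
        have "x \<ominus>\<^bsub>M\<^esub> y = (S k \<ominus>\<^bsub>M\<^esub> S n) \<ominus>\<^bsub>M\<^esub> (S l \<ominus>\<^bsub>M\<^esub> S n)"
          using M.sub_sub_cancel[of "S k" "S l" "S n"] S kl by simp
        thus "x \<ominus>\<^bsub>M\<^esub> y \<in> U" using Vadd[OF a(1) Vneg[OF a(2)]] n by (simp add: M.minus_eq subset_iff)
      qed
      ultimately show "\<exists>A. eventually (\<lambda>x. x \<in> A) F \<and> (\<forall>x\<in>A. \<forall>y\<in>A. x \<ominus>\<^bsub>M\<^esub> y \<in> U)" by blast
    qed
    obtain x where x: "x \<in> carrier M" "limitin TM id x F" using C Fb Fc Fcau unfolding complete_module_top_def by blast
    have "x \<ominus>\<^bsub>M\<^esub> S k \<in> V k" for k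
    proof -
      have o1: "openin TM {y\<in>carrier M. y \<ominus>\<^bsub>M\<^esub> x \<in> V k}" using ball[OF x(1)] .
      have o2: "x \<in> {y\<in>carrier M. y \<ominus>\<^bsub>M\<^esub> x \<in> V k}" using x(1) M.sub_self[OF x(1)] V0 by simp
      have lim: "\<forall>U. openin TM U \<and> x \<in> U \<longrightarrow> eventually (\<lambda>l. S l \<in> U) sequentially"
        using x(2) unfolding limitin_def F_def eventually_filtermap by simp
      have "eventually (\<lambda>l. S l \<in> {y\<in>carrier M. y \<ominus>\<^bsub>M\<^esub> x \<in> V k}) sequentially"
        using lim o1 o2 by blast
      then obtain N0 where N0: "\<forall>l\<ge>N0. S l \<in> {y\<in>carrier M. y \<ominus>\<^bsub>M\<^esub> x \<in> V k}" unfolding eventually_sequentially by blast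
      define l where "l = max N0 k"
      have a: "S l \<ominus>\<^bsub>M\<^esub> x \<in> V k" using N0 l_def by simp
      have b: "S l \<ominus>\<^bsub>M\<^esub> S k \<in> V k" using cau l_def by simp
      have "x \<ominus>\<^bsub>M\<^esub> S k = \<ominus>\<^bsub>M\<^esub> (S l \<ominus>\<^bsub>M\<^esub> x) \<oplus>\<^bsub>M\<^esub> (S l \<ominus>\<^bsub>M\<^esub> S k)"
        using M.neg_sub[of "S l" x] M.sub_trans[of x "S l" "S k"] S x(1) by simp
      thus ?thesis using Vadd[OF Vneg[OF a] b] by simp
    qed
    thus ?thesis using x(1) by blast
  qed
  have sep: "\<exists>D. countable D \<and> D \<subseteq> carrier M \<and> (\<forall>x\<in>carrier M. \<forall>n. \<exists>d\<in>D. d \<ominus>\<^bsub>M\<^esub> x \<in> V n)"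
  proof -
    define D where "D = (\<lambda>b. SOME p. p \<in> b) ` {b \<in> BB. b \<noteq> {}}"
    have "countable D" unfolding D_def using BB(1) by simp
    moreover have "D \<subseteq> carrier M"
    proof
      fix d assume "d \<in> D"
      then obtain b where b: "b \<in> BB" "b \<noteq> {}" "d = (SOME p. p \<in> b)" unfolding D_def by blast
      hence "d \<in> b" by (simp add: some_in_eq)
      thus "d \<in> carrier M" using BB(2)[OF b(1)] openin_subset top by blast
    qed
    moreover have "\<exists>d\<in>D. d \<ominus>\<^bsub>M\<^esub> x \<in> V n" if x: "x \<in> carrier M" for x n
    proof -
      have "x \<in> {y\<in>carrier M. y \<ominus>\<^bsub>M\<^esub> x \<in> V n}" using x M.sub_self[OF x] V0 by simp
      then obtain b where b: "b \<in> BB" "x \<in> b" "b \<subseteq> {y\<in>carrier M. y \<ominus>\<^bsub>M\<^esub> x \<in> V n}"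
        using BB(3)[OF ball[OF x]] by blast
      have "(SOME p. p \<in> b) \<in> b" using b(2) by (rule someI)
      moreover have "(SOME p. p \<in> b) \<in> D" unfolding D_def using b by blast
      ultimately show ?thesis using b(3) by blast
    qed
    ultimately show ?thesis by blast
  qed
  have "tdg M TM V"
    by (intro tdg.intro tdg_axioms.intro ag; (rule top Vsub V0 Vadd Vneg Vdec opn haus compl sep; assumption))
  thus ?thesis by blast
qed

lemma fcont_of:
  assumes tM: "tdg M TM V" and tN: "tdg N TN U"
    and fcar: "\<And>x. x \<in> carrier M \<Longrightarrow> f x \<in> carrier N"
    and fadd: "\<And>x y. x \<in> carrier M \<Longrightarrow> y \<in> carrier M \<Longrightarrow> f (x \<oplus>\<^bsub>M\<^esub> y) = f x \<oplus>\<^bsub>N\<^esub> f y"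
    and cont: "continuous_map TM TN f"
  shows "\<exists>m. \<forall>x\<in>V m. f x \<in> U n"
proof -
  interpret M: tdg M TM V by (rule tM)
  interpret N: tdg N TN U by (rule tN)
  have f0: "f \<zero>\<^bsub>M\<^esub> = \<zero>\<^bsub>N\<^esub>"
    by (rule hom_zero[OF M.abelian_group_axioms N.abelian_group_axioms fcar fadd])
  have Uo: "openin TN (U n)"
    unfolding N.opn
  proof (intro conjI ballI)
    show "U n \<subseteq> carrier N" by (rule N.Usub)
    fix x assume x: "x \<in> U n"
    have "y \<in> U n" if "y \<in> carrier N" "y \<ominus>\<^bsub>N\<^esub> x \<in> U n" for y
      using N.Uadd[OF x that(2)] N.add_sub_cancel2[of x y] N.Ucar[OF x] that(1) by simp
    thus "\<exists>m. \<forall>y\<in>carrier N. y \<ominus>\<^bsub>N\<^esub> x \<in> U m \<longrightarrow> y \<in> U n" by blast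
  qed
  have P: "openin TM {x \<in> topspace TM. f x \<in> U n}" by (rule openin_continuous_map_preimage[OF cont Uo])
  have "\<zero>\<^bsub>M\<^esub> \<in> {x \<in> topspace TM. f x \<in> U n}" using f0 N.U0 M.top by simp
  then obtain m where m: "\<forall>y\<in>carrier M. y \<ominus>\<^bsub>M\<^esub> \<zero>\<^bsub>M\<^esub> \<in> V m \<longrightarrow> y \<in> {x \<in> topspace TM. f x \<in> U n}"
    using P unfolding M.opn by blast
  have "f x \<in> U n" if "x \<in> V m" for x
    using m that M.Ucar[OF that] M.sub_zero by simp
  thus ?thesis by blast
qed

theorem proposition2p7:
  fixes R :: "('r, 'x) ring_scheme" and TR :: "'r topology"
    and M :: "('r, 'm) module" and TM :: "'m topology"
    and N :: "('r, 'n) module" and TN :: "'n topology"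
    and f :: "'m \<Rightarrow> 'n"
  assumes "topological_ring R TR"
    and "compact_space TR" and "Hausdorff_space TR" and "first_countable TR"
  shows "(td_module R TR M TM \<and> td_module R TR N TN \<and> linear_map_mod R M N f \<and>
           continuous_map TM TN f \<and> f ` carrier M = carrier N \<longrightarrow>
           strict_map M TM N TN f \<and>
           (\<exists>s. continuous_map TN TM s \<and> (\<forall>y\<in>carrier N. f (s y) = y)))
       \<and> (td_module R TR M TM \<and> td_module R TR N TN \<and> linear_map_mod R M N f \<and>
           continuous_map TM TN f \<and> inj_on f (carrier M) \<longrightarrow>
           (strict_map M TM N TN f \<longleftrightarrow>
            (\<exists>r. continuous_map TN TM r \<and> (\<forall>x\<in>carrier M. r (f x) = x))))"
proof -
  have prep: "\<exists>V U. tdmap M TM V N TN U f"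
    if tdM: "td_module R TR M TM" and tdN: "td_module R TR N TN" and lin: "linear_map_mod R M N f"
      and cont: "continuous_map TM TN f"
  proof -
    obtain V where tM: "tdg M TM V" using td_tdg[OF tdM] by blast
    obtain U where tN: "tdg N TN U" using td_tdg[OF tdN] by blast
    have fcar: "\<And>x. x \<in> carrier M \<Longrightarrow> f x \<in> carrier N" using lin unfolding linear_map_mod_def by blast
    have fadd: "\<And>x y. x \<in> carrier M \<Longrightarrow> y \<in> carrier M \<Longrightarrow> f (x \<oplus>\<^bsub>M\<^esub> y) = f x \<oplus>\<^bsub>N\<^esub> f y"
      using lin unfolding linear_map_mod_def by blast
    have fcont: "\<And>n. \<exists>m. \<forall>x\<in>V m. f x \<in> U n" using fcont_of[OF tM tN fcar fadd cont] by blast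
    have "tdmap M TM V N TN U f"
      by (intro tdmap.intro tM tN tdmap_axioms.intro; (rule fcar fadd fcont; assumption))
    thus ?thesis by blast
  qed
  show ?thesis
  proof (rule conjI; intro impI)
    assume A: "td_module R TR M TM \<and> td_module R TR N TN \<and> linear_map_mod R M N f \<and>
           continuous_map TM TN f \<and> f ` carrier M = carrier N"
    then obtain V U where T: "tdmap M TM V N TN U f" using prep by blast
    interpret T: tdmap M TM V N TN U f by (rule T)
    have surj: "f ` carrier M = carrier N" using A by blast
    have cont: "continuous_map TM TN f" using A by blast
    have "strict_map M TM N TN f"
    proof (rule T.strict_from_open[OF cont])
      fix W assume "openin TM W"
      hence "openin TN (f ` W)" by (rule T.f_open[OF surj])
      moreover have "subtopology TN (f ` carrier M) = TN" using surj T.N.top subtopology_topspace[of TN] by simp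
      ultimately show "openin (subtopology TN (f ` carrier M)) (f ` W)" by simp
    qed
    thus "strict_map M TM N TN f \<and> (\<exists>s. continuous_map TN TM s \<and> (\<forall>y\<in>carrier N. f (s y) = y))"
      using T.section_ex[OF surj] by blast
  next
    assume A: "td_module R TR M TM \<and> td_module R TR N TN \<and> linear_map_mod R M N f \<and>
           continuous_map TM TN f \<and> inj_on f (carrier M)"
    then obtain V U where T: "tdmap M TM V N TN U f" using prep by blast
    interpret T: tdmap M TM V N TN U f by (rule T)
    have inj: "inj_on f (carrier M)" using A by blast
    have cont: "continuous_map TM TN f" using A by blast
    show "strict_map M TM N TN f \<longleftrightarrow> (\<exists>r. continuous_map TN TM r \<and> (\<forall>x\<in>carrier M. r (f x) = x))"
    proof
      assume st: "strict_map M TM N TN f"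
      have "\<And>n. \<exists>j. \<forall>x\<in>carrier M. f x \<in> U j \<longrightarrow> x \<in> V n"
        by (rule T.open_image_imp_rel[OF T.strict_imp_open[OF inj st] inj])
      thus "\<exists>r. continuous_map TN TM r \<and> (\<forall>x\<in>carrier M. r (f x) = x)"
        by (rule T.retract_ex[OF inj])
    next
      assume "\<exists>r. continuous_map TN TM r \<and> (\<forall>x\<in>carrier M. r (f x) = x)"
      then obtain r where r: "continuous_map TN TM r" "\<forall>x\<in>carrier M. r (f x) = x" by blast
      have rel: "\<And>n. \<exists>j. \<forall>x\<in>carrier M. f x \<in> U j \<longrightarrow> x \<in> V n"
        by (rule T.rel_from_retract[OF r])
      show "strict_map M TM N TN f"
        by (rule T.strict_from_open[OF cont T.rel_imp_open_image[OF rel]])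
    qed
  qed
qed

end
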